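(* Let $p_1,p_2\ge 0$ with $p_1+p_2\le 1$ and $n\ge 1$. Then \[ 400\,E(\mathrm{STN}(RPC(n,p_1,p_2)))=441\,E(\mathrm{STN}(RSC(n,p_1,p_2)))-1035n-441. \]
   Context: For a graph $G$, $\mathrm{STN}(G)$ is the number of nonempty subtrees of $G$ (subgraphs that are trees, single vertices included). A polyphenylene chain with $n$ hexagons consists of pairwise vertex-disjoint hexagons $H_1,\dots,H_n$ where for each $i<n$ one vertex of $H_i$ is joined to one vertex of $H_{i+1}$ by a single cut edge, with no other edges. A spiro chain with $n$ hexagons consists of hexagons $H_1,\dots,H_n$ where $H_i$ and $H_{i+1}$ share exactly one vertex (cut vertex), non-consecutive hexagons are disjoint. In either kind of chain, for $2\le i\le n-1$, the two vertices of $H_i$ used for connecting to $H_{i-1}$ and $H_{i+1}$ are at distance $1$ (ortho), $2$ (meta) or $3$ (para) in $H_i$. The random chains $RPC(n,p_1,p_2)$ (polyphenylene) and $RSC(n,p_1,p_2)$ (spiro) are built by stepwise addition of terminal hexagons: for $n\le2$ the chain is unique, and at each step $i=3,\dots,n$ the new hexagon $H_i$ is attached (by a cut edge, resp. by sharing a vertex) at a vertex of $H_{i-1}$ at distance $1$ from the vertex of $H_{i-1}$ connected to $H_{i-2}$ with probability $p_1$, at distance $2$ with probability $p_2$, and at distance $3$ with probability $1-p_1-p_2$, independently at each step. *)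

theory Defs
  imports Complex_Main
begin

text \<open>A (simple) graph is given by a vertex set V and a set E of edges, each
edge being a two-element set of vertices.\<close>

definition is_subgraph :: "'a set \<Rightarrow> 'a set set \<Rightarrow> 'a set \<Rightarrow> 'a set set \<Rightarrow> bool" where
  "is_subgraph V E S F \<longleftrightarrow> S \<subseteq> V \<and> F \<subseteq> E \<and> (\<forall>e\<in>F. e \<subseteq> S)"

definition graph_connected :: "'a set \<Rightarrow> 'a set set \<Rightarrow> bool" where
  "graph_connected S F \<longleftrightarrow> S \<noteq> {} \<and>
     (\<forall>u\<in>S. \<forall>v\<in>S. (u, v) \<in> {(x, y). {x, y} \<in> F}\<^sup>*)"

definition has_cycle :: "'a set \<Rightarrow> 'a set set \<Rightarrow> bool" where
  "has_cycle S F \<longleftrightarrow> (\<exists>vs. length vs \<ge> 3 \<and> distinct vs \<and> set vs \<subseteq> S \<and>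
     (\<forall>i < length vs. {vs ! i, vs ! ((i + 1) mod length vs)} \<in> F))"

definition is_tree :: "'a set \<Rightarrow> 'a set set \<Rightarrow> bool" where
  "is_tree S F \<longleftrightarrow> graph_connected S F \<and> \<not> has_cycle S F"

definition STN :: "'a set \<Rightarrow> 'a set set \<Rightarrow> nat" where
  "STN V E = card {(S, F). is_subgraph V E S F \<and> S \<noteq> {} \<and> is_tree S F}"

text \<open>Hexagons are indexed 0..n-1; vertex (i,j), j<6, is position j on hexagon i,
positions in cyclic order. For 1 <= i, the vertex of hexagon i used to connect to
hexagon i-1 is position 0; the vertex of hexagon i used to connect to hexagon i+1
is position \<open>ds ! (i - 1)\<close> for 1 <= i <= n-2 (at distance \<open>ds ! (i-1)\<close>
in {1,2,3} from position 0), and position 0 for hexagon 0.\<close>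

definition exit_pos :: "nat list \<Rightarrow> nat \<Rightarrow> nat" where
  "exit_pos ds i = (if i = 0 then 0 else ds ! (i - 1))"

definition hex_vertices :: "nat \<Rightarrow> (nat \<times> nat) set" where
  "hex_vertices n = {(i, j). i < n \<and> j < 6}"

definition hex_edges :: "nat \<Rightarrow> (nat \<times> nat) set set" where
  "hex_edges n = {{(i, j), (i, (j + 1) mod 6)} | i j. i < n \<and> j < 6}"

text \<open>Polyphenylene chain: disjoint hexagons joined by cut edges.\<close>
definition PC_vertices :: "nat \<Rightarrow> nat list \<Rightarrow> (nat \<times> nat) set" where
  "PC_vertices n ds = hex_vertices n"

definition PC_edges :: "nat \<Rightarrow> nat list \<Rightarrow> (nat \<times> nat) set set" where
  "PC_edges n ds = hex_edges n \<union>
     {{(i, exit_pos ds i), (i + 1, 0)} | i. i + 1 < n}"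

text \<open>Spiro chain: position 0 of hexagon i (i >= 1) is identified with the exit
vertex of hexagon i-1.\<close>
definition spiro_map :: "nat list \<Rightarrow> nat \<times> nat \<Rightarrow> nat \<times> nat" where
  "spiro_map ds v = (if snd v = 0 \<and> fst v > 0 then (fst v - 1, exit_pos ds (fst v - 1)) else v)"

definition SC_vertices :: "nat \<Rightarrow> nat list \<Rightarrow> (nat \<times> nat) set" where
  "SC_vertices n ds = spiro_map ds ` hex_vertices n"

definition SC_edges :: "nat \<Rightarrow> nat list \<Rightarrow> (nat \<times> nat) set set" where
  "SC_edges n ds = (\<lambda>e. spiro_map ds ` e) ` hex_edges n"

text \<open>Admissible sequences of choices made at steps 3..n: \<open>ds ! k\<close> is the
distance chosen at step k+3.\<close>
definition choice_seqs :: "nat \<Rightarrow> nat list set" where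
  "choice_seqs n = {ds. length ds = n - 2 \<and> set ds \<subseteq> {1, 2, 3}}"

definition step_prob :: "real \<Rightarrow> real \<Rightarrow> nat \<Rightarrow> real" where
  "step_prob p1 p2 d = (if d = 1 then p1 else if d = 2 then p2 else 1 - p1 - p2)"

definition seq_prob :: "real \<Rightarrow> real \<Rightarrow> nat list \<Rightarrow> real" where
  "seq_prob p1 p2 ds = (\<Prod>d\<leftarrow>ds. step_prob p1 p2 d)"

definition E_STN_RPC :: "nat \<Rightarrow> real \<Rightarrow> real \<Rightarrow> real" where
  "E_STN_RPC n p1 p2 = (\<Sum>ds\<in>choice_seqs n.
      seq_prob p1 p2 ds * real (STN (PC_vertices n ds) (PC_edges n ds)))"

definition E_STN_RSC :: "nat \<Rightarrow> real \<Rightarrow> real \<Rightarrow> real" where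
  "E_STN_RSC n p1 p2 = (\<Sum>ds\<in>choice_seqs n.
      seq_prob p1 p2 ds * real (STN (SC_vertices n ds) (SC_edges n ds)))"

end

theory Submission
  imports Defs
begin


definition subtrees :: "'a set \<Rightarrow> 'a set set \<Rightarrow> ('a set \<times> 'a set set) set" where
  "subtrees V E = {(S, F). is_subgraph V E S F \<and> S \<noteq> {} \<and> is_tree S F}"

lemma STN_eq: "STN V E = card (subtrees V E)"
  by (simp add: STN_def subtrees_def)

lemma finite_subtrees: "finite V \<Longrightarrow> finite E \<Longrightarrow> finite (subtrees V E)"
  by (rule finite_subset[of _ "Pow V \<times> Pow E"]) (auto simp: subtrees_def is_subgraph_def)

definition adj :: "'a set set \<Rightarrow> ('a \<times> 'a) set" where
  "adj F = {(x, y). {x, y} \<in> F}"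

lemma conn_iff: "graph_connected S F \<longleftrightarrow> S \<noteq> {} \<and> (\<forall>u\<in>S. \<forall>v\<in>S. (u, v) \<in> (adj F)\<^sup>*)"
  by (simp add: graph_connected_def adj_def)

lemma adj_sym: "sym (adj F)"
  by (auto simp: adj_def sym_def insert_commute)

lemma rt_sym: "(x, y) \<in> (adj F)\<^sup>* \<Longrightarrow> (y, x) \<in> (adj F)\<^sup>*"
  using sym_rtrancl[OF adj_sym[of F]] by (auto simp: sym_def)

lemma rt_mono: "F \<subseteq> F' \<Longrightarrow> (x, y) \<in> (adj F)\<^sup>* \<Longrightarrow> (x, y) \<in> (adj F')\<^sup>*"
  by (rule rtrancl_mono[THEN subsetD, of "adj F"]) (auto simp: adj_def)

lemma adj_step: "{x, y} \<in> F \<Longrightarrow> (x, y) \<in> (adj F)\<^sup>*"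
  by (auto simp: adj_def)

lemma reach_closed:
  assumes "(x, y) \<in> R\<^sup>*" "x \<in> A" "\<And>u w. (u, w) \<in> R \<Longrightarrow> u \<in> A \<Longrightarrow> w \<in> A"
  shows "y \<in> A"
  using assms by (induction rule: rtrancl_induct) auto

lemma cycle_mono: "has_cycle S F \<Longrightarrow> S \<subseteq> S' \<Longrightarrow> F \<subseteq> F' \<Longrightarrow> has_cycle S' F'"
  unfolding has_cycle_def by blast

lemma exit_lemma:
  assumes "p < length vs" "vs ! p \<in> A" "q < length vs" "vs ! q \<notin> A"
  shows "\<exists>i<length vs. vs ! i \<in> A \<and> vs ! ((i + 1) mod length vs) \<notin> A"
proof (rule ccontr)
  let ?L = "length vs"
  assume "\<not> ?thesis"
  then have st: "\<And>i. i < ?L \<Longrightarrow> vs ! i \<in> A \<Longrightarrow> vs ! ((i + 1) mod ?L) \<in> A" by blast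
  have L: "?L > 0" using assms by auto
  have "vs ! ((p + k) mod ?L) \<in> A" for k
  proof (induction k)
    case 0 then show ?case using assms by simp
  next
    case (Suc k)
    have "vs ! (((p + k) mod ?L + 1) mod ?L) \<in> A" using st[OF _ Suc] L by simp
    moreover have "((p + k) mod ?L + 1) mod ?L = (p + Suc k) mod ?L" by (simp add: mod_simps)
    ultimately show ?case by simp
  qed
  from this[of "q + ?L - p"] have "vs ! ((q + ?L) mod ?L) \<in> A" using assms by simp
  then show False using assms by simp
qed

lemma nth_mod_in: "0 < length vs \<Longrightarrow> set vs \<subseteq> A \<Longrightarrow> vs ! (k mod length vs) \<in> A"
  by (meson mod_less_divisor nth_mem subsetD)

lemma nth_in: "k < length vs \<Longrightarrow> set vs \<subseteq> A \<Longrightarrow> vs ! k \<in> A"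
  by (meson nth_mem subsetD)

lemma suc_mod: assumes "(i::nat) < L" shows "(i + 1) mod L = (if i + 1 = L then 0 else i + 1)"
proof (cases "i + 1 = L")
  case True
  then show ?thesis using mod_self[of L] by simp
next
  case False
  then have "i + 1 < L" using assms by linarith
  then show ?thesis using False by simp
qed

lemma dist_idx: "distinct vs \<Longrightarrow> i < length vs \<Longrightarrow> j < length vs \<Longrightarrow> vs ! i = vs ! j \<Longrightarrow> i = j"
  by (simp add: nth_eq_iff_index_eq)

lemma cycle_vertex:
  assumes V: "S1 \<inter> S2 = {v}" and F1: "\<forall>e\<in>F1. e \<subseteq> S1" and F2: "\<forall>e\<in>F2. e \<subseteq> S2"
    and cyc: "has_cycle (S1 \<union> S2) (F1 \<union> F2)"
  shows "has_cycle S1 F1 \<or> has_cycle S2 F2"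
proof -
  obtain vs where L3: "3 \<le> length vs" and d: "distinct vs" and sv: "set vs \<subseteq> S1 \<union> S2"
    and ed: "\<forall>i<length vs. {vs ! i, vs ! ((i + 1) mod length vs)} \<in> F1 \<union> F2"
    using cyc unfolding has_cycle_def by blast
  let ?L = "length vs"
  have L0: "0 < ?L" using L3 by linarith
  have neq: "vs ! i \<noteq> vs ! ((i + 1) mod ?L)" if "i < ?L" for i
  proof
    assume "vs ! i = vs ! ((i + 1) mod ?L)"
    then have "i = (i + 1) mod ?L" using d that L0 by (intro dist_idx) auto
    then show False using that L3 suc_mod[OF that] by (auto split: if_splits)
  qed
  show ?thesis
  proof (cases "set vs \<subseteq> S1")
    case True
    have "\<forall>i<?L. {vs ! i, vs ! ((i + 1) mod ?L)} \<in> F1"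
    proof (intro allI impI)
      fix i assume i: "i < ?L"
      have m: "vs ! i \<in> S1" "vs ! ((i + 1) mod ?L) \<in> S1" using True i L0 by (auto intro: nth_in nth_mod_in)
      show "{vs ! i, vs ! ((i + 1) mod ?L)} \<in> F1"
      proof (rule ccontr)
        assume "\<not> ?thesis"
        then have "{vs ! i, vs ! ((i + 1) mod ?L)} \<subseteq> S2" using ed i F2 by blast
        then have "vs ! i \<in> S1 \<inter> S2" "vs ! ((i + 1) mod ?L) \<in> S1 \<inter> S2" using m by auto
          then show False using V neq[OF i] by auto
      qed
    qed
    then show ?thesis using L3 d True unfolding has_cycle_def by blast
  next
    case False
    show ?thesis
    proof (cases "set vs \<subseteq> S2")
      case True
      have "\<forall>i<?L. {vs ! i, vs ! ((i + 1) mod ?L)} \<in> F2"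
      proof (intro allI impI)
        fix i assume i: "i < ?L"
        have m: "vs ! i \<in> S2" "vs ! ((i + 1) mod ?L) \<in> S2" using True i L0 by (auto intro: nth_in nth_mod_in)
        show "{vs ! i, vs ! ((i + 1) mod ?L)} \<in> F2"
        proof (rule ccontr)
          assume "\<not> ?thesis"
          then have "{vs ! i, vs ! ((i + 1) mod ?L)} \<subseteq> S1" using ed i F1 by blast
          then have "vs ! i \<in> S1 \<inter> S2" "vs ! ((i + 1) mod ?L) \<in> S1 \<inter> S2" using m by auto
          then show False using V neq[OF i] by auto
        qed
      qed
      then show ?thesis using L3 d True unfolding has_cycle_def by blast
    next
      case False2: False
      obtain p where p: "p < ?L" "vs ! p \<notin> S1" using False by (metis in_set_conv_nth subsetI)
      obtain q where q: "q < ?L" "vs ! q \<notin> S2" using False2 by (metis in_set_conv_nth subsetI)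
      have p2: "vs ! p \<in> S2 - {v}" using p sv V by (auto simp: set_conv_nth)
      have q1: "vs ! q \<in> S1 - {v}" using q sv V by (auto simp: set_conv_nth)
      obtain i where i: "i < ?L" "vs ! i \<in> S1 - {v}" "vs ! ((i + 1) mod ?L) \<notin> S1 - {v}"
        using exit_lemma[of q vs "S1 - {v}" p] q q1 p p2 by auto
      have "{vs ! i, vs ! ((i + 1) mod ?L)} \<in> F1"
      proof (rule ccontr)
        assume "\<not> ?thesis"
        then have "{vs ! i, vs ! ((i + 1) mod ?L)} \<subseteq> S2" using ed i F2 by blast
        then show False using i V by auto
      qed
      then have vi: "vs ! ((i + 1) mod ?L) = v" using F1 i by auto
      obtain j where j: "j < ?L" "vs ! j \<in> S2 - {v}" "vs ! ((j + 1) mod ?L) \<notin> S2 - {v}"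
        using exit_lemma[of p vs "S2 - {v}" q] q q1 p p2 by auto
      have "{vs ! j, vs ! ((j + 1) mod ?L)} \<in> F2"
      proof (rule ccontr)
        assume "\<not> ?thesis"
        then have "{vs ! j, vs ! ((j + 1) mod ?L)} \<subseteq> S1" using ed j F1 by blast
        then show False using j V by auto
      qed
      then have vj: "vs ! ((j + 1) mod ?L) = v" using F2 j by auto
      have "(i + 1) mod ?L = (j + 1) mod ?L"
        using vi vj d i j L0 by (intro dist_idx) auto
      then have "i = j" using i j suc_mod[OF i(1)] suc_mod[OF j(1)] by (auto split: if_splits)
      then have "vs ! i \<in> S1 \<inter> S2" using i j by auto
      then show ?thesis using V i by auto
    qed
  qed
qed

lemma cycle_edge:
  assumes V: "S1 \<inter> S2 = {}" and u: "u \<in> S1" and w: "w \<in> S2"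
    and F1: "\<forall>e\<in>F1. e \<subseteq> S1" and F2: "\<forall>e\<in>F2. e \<subseteq> S2"
    and cyc: "has_cycle (S1 \<union> S2) (insert {u, w} (F1 \<union> F2))"
  shows "has_cycle S1 F1 \<or> has_cycle S2 F2"
proof -
  obtain vs where L3: "3 \<le> length vs" and d: "distinct vs" and sv: "set vs \<subseteq> S1 \<union> S2"
    and ed: "\<forall>i<length vs. {vs ! i, vs ! ((i + 1) mod length vs)} \<in> insert {u, w} (F1 \<union> F2)"
    using cyc unfolding has_cycle_def by blast
  let ?L = "length vs"
  have L0: "0 < ?L" using L3 by linarith
  show ?thesis
  proof (cases "set vs \<subseteq> S1")
    case True
    have "\<forall>i<?L. {vs ! i, vs ! ((i + 1) mod ?L)} \<in> F1"
    proof (intro allI impI)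
      fix i assume i: "i < ?L"
      have m: "vs ! i \<in> S1" "vs ! ((i + 1) mod ?L) \<in> S1" using True i L0 by (auto intro: nth_in nth_mod_in)
      have "{vs ! i, vs ! ((i + 1) mod ?L)} \<noteq> {u, w}"
      proof
        assume "{vs ! i, vs ! ((i + 1) mod ?L)} = {u, w}"
        then have "w \<in> {vs ! i, vs ! ((i + 1) mod ?L)}" by auto
        then show False using m w V by auto
      qed
      moreover have "{vs ! i, vs ! ((i + 1) mod ?L)} \<notin> F2"
      proof
        assume "{vs ! i, vs ! ((i + 1) mod ?L)} \<in> F2"
        then have "vs ! i \<in> S2" using F2 by blast
        then show False using m V by auto
      qed
      ultimately show "{vs ! i, vs ! ((i + 1) mod ?L)} \<in> F1" using ed i by auto
    qed
    then show ?thesis using L3 d True unfolding has_cycle_def by blast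
  next
    case False
    show ?thesis
    proof (cases "set vs \<subseteq> S2")
      case True
      have "\<forall>i<?L. {vs ! i, vs ! ((i + 1) mod ?L)} \<in> F2"
      proof (intro allI impI)
        fix i assume i: "i < ?L"
        have m: "vs ! i \<in> S2" "vs ! ((i + 1) mod ?L) \<in> S2" using True i L0 by (auto intro: nth_in nth_mod_in)
        have "{vs ! i, vs ! ((i + 1) mod ?L)} \<noteq> {u, w}"
      proof
        assume "{vs ! i, vs ! ((i + 1) mod ?L)} = {u, w}"
        then have "u \<in> {vs ! i, vs ! ((i + 1) mod ?L)}" by auto
        then show False using m u V by auto
      qed
        moreover have "{vs ! i, vs ! ((i + 1) mod ?L)} \<notin> F1"
        proof
          assume "{vs ! i, vs ! ((i + 1) mod ?L)} \<in> F1"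
          then have "vs ! i \<in> S1" using F1 by blast
          then show False using m V by auto
        qed
        ultimately show "{vs ! i, vs ! ((i + 1) mod ?L)} \<in> F2" using ed i by auto
      qed
      then show ?thesis using L3 d True unfolding has_cycle_def by blast
    next
      case False2: False
      obtain p where p: "p < ?L" "vs ! p \<notin> S1" using False by (metis in_set_conv_nth subsetI)
      obtain q where q: "q < ?L" "vs ! q \<notin> S2" using False2 by (metis in_set_conv_nth subsetI)
      have p2: "vs ! p \<in> S2" using p sv by (auto simp: set_conv_nth)
      have q1: "vs ! q \<in> S1" using q sv by (auto simp: set_conv_nth)
      obtain i where i: "i < ?L" "vs ! i \<in> S1" "vs ! ((i + 1) mod ?L) \<notin> S1"
        using exit_lemma[of q vs "S1" p] q q1 p p2 by auto
      have i2: "vs ! ((i + 1) mod ?L) \<in> S2" using i sv L0 by (meson UnE nth_mod_in)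
      have "{vs ! i, vs ! ((i + 1) mod ?L)} \<notin> F1" using F1 i by blast
      moreover have "{vs ! i, vs ! ((i + 1) mod ?L)} \<notin> F2"
      proof
        assume "{vs ! i, vs ! ((i + 1) mod ?L)} \<in> F2"
        then have "vs ! i \<in> S2" using F2 by blast
        then show False using i V by auto
      qed
      ultimately have "{vs ! i, vs ! ((i + 1) mod ?L)} = {u, w}" using ed i by auto
      then have vi: "vs ! i = u" "vs ! ((i + 1) mod ?L) = w" using i i2 u w V
        by (auto simp: doubleton_eq_iff)
      obtain j where j: "j < ?L" "vs ! j \<in> S2" "vs ! ((j + 1) mod ?L) \<notin> S2"
        using exit_lemma[of p vs "S2" q] q q1 p p2 by auto
      have j2: "vs ! ((j + 1) mod ?L) \<in> S1" using j sv L0 by (meson UnE nth_mod_in)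
      have "{vs ! j, vs ! ((j + 1) mod ?L)} \<notin> F2" using F2 j by blast
      moreover have "{vs ! j, vs ! ((j + 1) mod ?L)} \<notin> F1"
      proof
        assume "{vs ! j, vs ! ((j + 1) mod ?L)} \<in> F1"
        then have "vs ! j \<in> S1" using F1 by blast
        then show False using j V by auto
      qed
      ultimately have "{vs ! j, vs ! ((j + 1) mod ?L)} = {u, w}" using ed j by auto
      then have vj: "vs ! j = w" "vs ! ((j + 1) mod ?L) = u" using j j2 u w V
        by (auto simp: doubleton_eq_iff)
      have e1: "(i + 1) mod ?L = j" using vi vj d i j L0 by (intro dist_idx) auto
      have e2: "(j + 1) mod ?L = i" using vi vj d i j L0 by (intro dist_idx) auto
      show ?thesis using e1 e2 suc_mod[OF i(1)] suc_mod[OF j(1)] L3 i j by (auto split: if_splits)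
    qed
  qed
qed

lemma component:
  assumes conn: "graph_connected S F" and FS: "\<forall>e\<in>F. e \<subseteq> S"
    and FV: "\<forall>e\<in>F. e \<subseteq> V1 \<or> e \<subseteq> V2" and SV: "S \<subseteq> V1 \<union> V2" and D: "S \<inter> V1 \<inter> V2 = {}"
  shows "S \<subseteq> V1 \<or> S \<subseteq> V2"
proof -
  obtain s where s: "s \<in> S" using conn by (auto simp: conn_iff)
  have r: "\<forall>y\<in>S. (s, y) \<in> (adj F)\<^sup>*" using conn s by (auto simp: conn_iff)
  have cl: "\<And>u w. (u, w) \<in> adj F \<Longrightarrow> u \<in> S \<inter> Vi \<Longrightarrow> w \<in> S \<inter> Vi"
    if "Vi = V1 \<or> Vi = V2" for Vi
  proof -
    fix u w assume uw: "(u, w) \<in> adj F" and u: "u \<in> S \<inter> Vi"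
    have e: "{u, w} \<in> F" using uw by (simp add: adj_def)
    then have "{u, w} \<subseteq> S" using FS by blast
    moreover have "{u, w} \<subseteq> Vi" using FV e u D that by blast
    ultimately show "w \<in> S \<inter> Vi" by auto
  qed
  show ?thesis
  proof (cases "s \<in> V1")
    case True
    have "y \<in> S \<inter> V1" if "y \<in> S" for y
      by (rule reach_closed[of s y "adj F"]) (use r that True s cl[of V1] in auto)
    then show ?thesis by auto
  next
    case False
    then have "s \<in> V2" using s SV by auto
    have "y \<in> S \<inter> V2" if "y \<in> S" for y
      by (rule reach_closed[of s y "adj F"]) (use r that \<open>s \<in> V2\<close> s cl[of V2] in auto)
    then show ?thesis by auto
  qed
qed

lemma reach_split_vertex:
  assumes "(v, y) \<in> (adj F)\<^sup>*" and FE: "F \<subseteq> E1 \<union> E2" and V: "V1 \<inter> V2 = {v}"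
    and E1: "\<forall>e\<in>E1. e \<subseteq> V1" and E2: "\<forall>e\<in>E2. e \<subseteq> V2"
  shows "(y \<in> V1 \<longrightarrow> (v, y) \<in> (adj (F \<inter> E1))\<^sup>*) \<and> (y \<in> V2 \<longrightarrow> (v, y) \<in> (adj (F \<inter> E2))\<^sup>*)"
  using assms(1)
proof (induction rule: rtrancl_induct)
  case base then show ?case by simp
next
  case (step y z)
  have e: "{y, z} \<in> F" using step(2) by (simp add: adj_def)
  show ?case
  proof (intro conjI impI)
    assume z: "z \<in> V1"
    show "(v, z) \<in> (adj (F \<inter> E1))\<^sup>*"
    proof (cases "{y, z} \<in> E1")
      case True
      then have "y \<in> V1" using E1 by blast
      then have "(v, y) \<in> (adj (F \<inter> E1))\<^sup>*" using step(3) by blast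
      moreover have "(y, z) \<in> adj (F \<inter> E1)" using True e by (simp add: adj_def)
      ultimately show ?thesis by (rule rtrancl_into_rtrancl)
    next
      case False
      then have "{y, z} \<in> E2" using e FE by blast
      then have "z = v" using E2 z V by blast
      then show ?thesis by simp
    qed
  next
    assume z: "z \<in> V2"
    show "(v, z) \<in> (adj (F \<inter> E2))\<^sup>*"
    proof (cases "{y, z} \<in> E2")
      case True
      then have "y \<in> V2" using E2 by blast
      then have "(v, y) \<in> (adj (F \<inter> E2))\<^sup>*" using step(3) by blast
      moreover have "(y, z) \<in> adj (F \<inter> E2)" using True e by (simp add: adj_def)
      ultimately show ?thesis by (rule rtrancl_into_rtrancl)
    next
      case False
      then have "{y, z} \<in> E1" using e FE by blast
      then have "z = v" using E1 z V by blast
      then show ?thesis by simp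
    qed
  qed
qed

lemma reach_split_edge:
  assumes "(u, y) \<in> (adj F)\<^sup>*" and FE: "F \<subseteq> insert {u, w} (E1 \<union> E2)" and V: "V1 \<inter> V2 = {}"
    and u: "u \<in> V1" and w: "w \<in> V2"
    and E1: "\<forall>e\<in>E1. e \<subseteq> V1" and E2: "\<forall>e\<in>E2. e \<subseteq> V2"
  shows "(y \<in> V1 \<longrightarrow> (u, y) \<in> (adj (F \<inter> E1))\<^sup>*) \<and> (y \<in> V2 \<longrightarrow> (w, y) \<in> (adj (F \<inter> E2))\<^sup>*)"
  using assms(1)
proof (induction rule: rtrancl_induct)
  case base then show ?case using u V by auto
next
  case (step y z)
  have e: "{y, z} \<in> F" using step(2) by (simp add: adj_def)
  show ?case
  proof (intro conjI impI)
    assume z: "z \<in> V1"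
    show "(u, z) \<in> (adj (F \<inter> E1))\<^sup>*"
    proof (cases "{y, z} \<in> E1")
      case True
      then have "y \<in> V1" using E1 by blast
      then have "(u, y) \<in> (adj (F \<inter> E1))\<^sup>*" using step(3) by blast
      moreover have "(y, z) \<in> adj (F \<inter> E1)" using True e by (simp add: adj_def)
      ultimately show ?thesis by (rule rtrancl_into_rtrancl)
    next
      case False
      show ?thesis
      proof (cases "{y, z} = {u, w}")
        case True
        then have "z = u" using z w V by (auto simp: doubleton_eq_iff)
        then show ?thesis by simp
      next
        case False2: False
        then have "{y, z} \<in> E2" using e FE False by blast
        then show ?thesis using E2 z V by blast
      qed
    qed
  next
    assume z: "z \<in> V2"
    show "(w, z) \<in> (adj (F \<inter> E2))\<^sup>*"
    proof (cases "{y, z} \<in> E2")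
      case True
      then have "y \<in> V2" using E2 by blast
      then have "(w, y) \<in> (adj (F \<inter> E2))\<^sup>*" using step(3) by blast
      moreover have "(y, z) \<in> adj (F \<inter> E2)" using True e by (simp add: adj_def)
      ultimately show ?thesis by (rule rtrancl_into_rtrancl)
    next
      case False
      show ?thesis
      proof (cases "{y, z} = {u, w}")
        case True
        then have "z = w" using z u V by (auto simp: doubleton_eq_iff)
        then show ?thesis by simp
      next
        case False2: False
        then have "{y, z} \<in> E1" using e FE False by blast
        then show ?thesis using E1 z V by blast
      qed
    qed
  qed
qed

lemma subtrees_iff: "(S, F) \<in> subtrees V E \<longleftrightarrow> S \<subseteq> V \<and> F \<subseteq> E \<and> (\<forall>e\<in>F. e \<subseteq> S) \<and> S \<noteq> {} \<and>
   (\<forall>x\<in>S. \<forall>y\<in>S. (x, y) \<in> (adj F)\<^sup>*) \<and> \<not> has_cycle S F"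
  by (auto simp: subtrees_def is_subgraph_def is_tree_def conn_iff)

lemma subtrees_mono: "t \<in> subtrees V E \<Longrightarrow> V \<subseteq> V' \<Longrightarrow> E \<subseteq> E' \<Longrightarrow> t \<in> subtrees V' E'"
  by (cases t) (auto simp: subtrees_iff)

definition glueV :: "('a set \<times> 'a set set) \<times> ('a set \<times> 'a set set) \<Rightarrow> 'a set \<times> 'a set set" where
  "glueV p = (fst (fst p) \<union> fst (snd p), snd (fst p) \<union> snd (snd p))"

definition glueE :: "'a set \<Rightarrow> ('a set \<times> 'a set set) \<times> ('a set \<times> 'a set set) \<Rightarrow> 'a set \<times> 'a set set" where
  "glueE e p = (fst (fst p) \<union> fst (snd p), insert e (snd (fst p) \<union> snd (snd p)))"

lemma glue_vertex:
  assumes V: "V1 \<inter> V2 = {v}" and E1: "\<forall>e\<in>E1. e \<subseteq> V1" and E2: "\<forall>e\<in>E2. e \<subseteq> V2"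
    and c2: "\<forall>e\<in>E1 \<union> E2. card e = 2"
  shows "subtrees (V1 \<union> V2) (E1 \<union> E2) = {t\<in>subtrees V1 E1. v \<notin> fst t} \<union> {t\<in>subtrees V2 E2. v \<notin> fst t}
     \<union> glueV ` ({t\<in>subtrees V1 E1. v \<in> fst t} \<times> {t\<in>subtrees V2 E2. v \<in> fst t})"
    (is "?L = ?A \<union> ?B \<union> ?C")
proof (intro equalityI subsetI)
  fix t assume "t \<in> ?L"
  obtain S F where t: "t = (S, F)" by (cases t)
  have SV: "S \<subseteq> V1 \<union> V2" and FE: "F \<subseteq> E1 \<union> E2" and FS: "\<forall>e\<in>F. e \<subseteq> S" and ne: "S \<noteq> {}"
    and conn: "\<forall>x\<in>S. \<forall>y\<in>S. (x, y) \<in> (adj F)\<^sup>*" and nc: "\<not> has_cycle S F"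
    using \<open>t \<in> ?L\<close> t by (auto simp: subtrees_iff)
  have small: "e \<notin> E1 \<union> E2" if "e \<subseteq> {v}" for e
  proof
    assume "e \<in> E1 \<union> E2"
    then have "card e = 2" using c2 by blast
    moreover have "card e \<le> 1" using card_mono[OF _ that] by simp
    ultimately show False by simp
  qed
  show "t \<in> ?A \<union> ?B \<union> ?C"
  proof (cases "v \<in> S")
    case False
    have "S \<subseteq> V1 \<or> S \<subseteq> V2"
    proof (rule component[of S F])
      show "graph_connected S F" using ne conn by (simp add: conn_iff)
      show "\<forall>e\<in>F. e \<subseteq> V1 \<or> e \<subseteq> V2" using FE E1 E2 by blast
      show "S \<inter> V1 \<inter> V2 = {}" using V False by auto
    qed (use FS SV in auto)
    then show ?thesis
    proof
      assume S1: "S \<subseteq> V1"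
      have "F \<subseteq> E1"
      proof
        fix e assume e: "e \<in> F"
        show "e \<in> E1"
        proof (rule ccontr)
          assume "e \<notin> E1"
          then have "e \<in> E2" using e FE by blast
          then have "e \<subseteq> {v}" using E2 FS e S1 V by blast
          then show False using small \<open>e \<in> E2\<close> by blast
        qed
      qed
      then have "t \<in> subtrees V1 E1" using t S1 FS ne conn nc by (auto simp: subtrees_iff)
      then show ?thesis using t False by auto
    next
      assume S2: "S \<subseteq> V2"
      have "F \<subseteq> E2"
      proof
        fix e assume e: "e \<in> F"
        show "e \<in> E2"
        proof (rule ccontr)
          assume "e \<notin> E2"
          then have "e \<in> E1" using e FE by blast
          then have "e \<subseteq> {v}" using E1 FS e S2 V by blast
          then show False using small \<open>e \<in> E1\<close> by blast
        qed
      qed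
      then have "t \<in> subtrees V2 E2" using t S2 FS ne conn nc by (auto simp: subtrees_iff)
      then show ?thesis using t False by auto
    qed
  next
    case True
    have r: "(y \<in> V1 \<longrightarrow> (v, y) \<in> (adj (F \<inter> E1))\<^sup>*) \<and> (y \<in> V2 \<longrightarrow> (v, y) \<in> (adj (F \<inter> E2))\<^sup>*)"
      if "y \<in> S" for y
      using reach_split_vertex[OF _ FE V E1 E2] conn True that by blast
    have t1: "(S \<inter> V1, F \<inter> E1) \<in> subtrees V1 E1"
      unfolding subtrees_iff
    proof (intro conjI)
      show "\<forall>e\<in>F \<inter> E1. e \<subseteq> S \<inter> V1" using FS E1 by blast
      show "S \<inter> V1 \<noteq> {}" using True V by auto
      show "\<forall>x\<in>S \<inter> V1. \<forall>y\<in>S \<inter> V1. (x, y) \<in> (adj (F \<inter> E1))\<^sup>*"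
        using r by (meson IntD1 IntD2 rt_sym rtrancl_trans)
      show "\<not> has_cycle (S \<inter> V1) (F \<inter> E1)" using nc cycle_mono[of "S \<inter> V1" "F \<inter> E1" S F] by blast
    qed auto
    have t2: "(S \<inter> V2, F \<inter> E2) \<in> subtrees V2 E2"
      unfolding subtrees_iff
    proof (intro conjI)
      show "\<forall>e\<in>F \<inter> E2. e \<subseteq> S \<inter> V2" using FS E2 by blast
      show "S \<inter> V2 \<noteq> {}" using True V by auto
      show "\<forall>x\<in>S \<inter> V2. \<forall>y\<in>S \<inter> V2. (x, y) \<in> (adj (F \<inter> E2))\<^sup>*"
        using r by (meson IntD1 IntD2 rt_sym rtrancl_trans)
      show "\<not> has_cycle (S \<inter> V2) (F \<inter> E2)" using nc cycle_mono[of "S \<inter> V2" "F \<inter> E2" S F] by blast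
    qed auto
    have "t = glueV ((S \<inter> V1, F \<inter> E1), (S \<inter> V2, F \<inter> E2))"
      using t SV FE by (auto simp: glueV_def)
    moreover have "((S \<inter> V1, F \<inter> E1), (S \<inter> V2, F \<inter> E2)) \<in> {t\<in>subtrees V1 E1. v \<in> fst t} \<times> {t\<in>subtrees V2 E2. v \<in> fst t}"
      using t1 t2 True V by auto
    ultimately show ?thesis by blast
  qed
next
  fix t assume "t \<in> ?A \<union> ?B \<union> ?C"
  then consider "t \<in> ?A" | "t \<in> ?B" | "t \<in> ?C" by blast
  then show "t \<in> ?L"
  proof cases
    case 1 then show ?thesis by (auto intro: subtrees_mono)
  next
    case 2 then show ?thesis by (auto intro: subtrees_mono)
  next
    case 3
    then obtain S1 F1 S2 F2 where t: "t = (S1 \<union> S2, F1 \<union> F2)"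
      and t1: "(S1, F1) \<in> subtrees V1 E1" "v \<in> S1" and t2: "(S2, F2) \<in> subtrees V2 E2" "v \<in> S2"
      by (auto simp: glueV_def)
    have a1: "S1 \<subseteq> V1" "F1 \<subseteq> E1" "\<forall>e\<in>F1. e \<subseteq> S1" "\<forall>x\<in>S1. \<forall>y\<in>S1. (x, y) \<in> (adj F1)\<^sup>*"
      "\<not> has_cycle S1 F1" using t1 by (auto simp: subtrees_iff)
    have a2: "S2 \<subseteq> V2" "F2 \<subseteq> E2" "\<forall>e\<in>F2. e \<subseteq> S2" "\<forall>x\<in>S2. \<forall>y\<in>S2. (x, y) \<in> (adj F2)\<^sup>*"
      "\<not> has_cycle S2 F2" using t2 by (auto simp: subtrees_iff)
    have rv: "(x, v) \<in> (adj (F1 \<union> F2))\<^sup>*" if "x \<in> S1 \<union> S2" for x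
    proof (cases "x \<in> S1")
      case True
      then have "(x, v) \<in> (adj F1)\<^sup>*" using a1(4) t1(2) by blast
      then show ?thesis by (rule rt_mono[rotated]) auto
    next
      case False
      then have "(x, v) \<in> (adj F2)\<^sup>*" using a2(4) t2(2) that by blast
      then show ?thesis by (rule rt_mono[rotated]) auto
    qed
    have I: "S1 \<inter> S2 = {v}" using a1(1) a2(1) V t1(2) t2(2) by auto
    have "\<not> has_cycle (S1 \<union> S2) (F1 \<union> F2)"
      using cycle_vertex[OF I a1(3) a2(3)] a1(5) a2(5) by blast
    moreover have "\<forall>x\<in>S1 \<union> S2. \<forall>y\<in>S1 \<union> S2. (x, y) \<in> (adj (F1 \<union> F2))\<^sup>*"
      using rv by (meson rt_sym rtrancl_trans)
    moreover have "S1 \<union> S2 \<subseteq> V1 \<union> V2" "F1 \<union> F2 \<subseteq> E1 \<union> E2" "\<forall>e\<in>F1 \<union> F2. e \<subseteq> S1 \<union> S2"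
      using a1 a2 by auto
    ultimately show ?thesis unfolding t subtrees_iff using t1 by auto
  qed
qed

lemma glue_edge:
  assumes V: "V1 \<inter> V2 = {}" and u: "u \<in> V1" and w: "w \<in> V2"
    and E1: "\<forall>e\<in>E1. e \<subseteq> V1" and E2: "\<forall>e\<in>E2. e \<subseteq> V2"
    and c2: "\<forall>e\<in>E1 \<union> E2. e \<noteq> {}"
  shows "subtrees (V1 \<union> V2) (insert {u, w} (E1 \<union> E2)) = subtrees V1 E1 \<union> subtrees V2 E2
     \<union> glueE {u, w} ` ({t\<in>subtrees V1 E1. u \<in> fst t} \<times> {t\<in>subtrees V2 E2. w \<in> fst t})"
    (is "?L = ?A \<union> ?B \<union> ?C")
proof (intro equalityI subsetI)
  fix t assume "t \<in> ?L"
  obtain S F where t: "t = (S, F)" by (cases t)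
  have SV: "S \<subseteq> V1 \<union> V2" and FE: "F \<subseteq> insert {u, w} (E1 \<union> E2)" and FS: "\<forall>e\<in>F. e \<subseteq> S" and ne: "S \<noteq> {}"
    and conn: "\<forall>x\<in>S. \<forall>y\<in>S. (x, y) \<in> (adj F)\<^sup>*" and nc: "\<not> has_cycle S F"
    using \<open>t \<in> ?L\<close> t by (auto simp: subtrees_iff)
  show "t \<in> ?A \<union> ?B \<union> ?C"
  proof (cases "{u, w} \<in> F")
    case False
    have FE': "F \<subseteq> E1 \<union> E2" using FE False by blast
    have "S \<subseteq> V1 \<or> S \<subseteq> V2"
    proof (rule component[of S F])
      show "graph_connected S F" using ne conn by (simp add: conn_iff)
      show "\<forall>e\<in>F. e \<subseteq> V1 \<or> e \<subseteq> V2" using FE' E1 E2 by blast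
      show "S \<inter> V1 \<inter> V2 = {}" using V by auto
    qed (use FS SV in auto)
    then show ?thesis
    proof
      assume S1: "S \<subseteq> V1"
      have "F \<subseteq> E1"
      proof
        fix e assume e: "e \<in> F"
        show "e \<in> E1"
        proof (rule ccontr)
          assume "e \<notin> E1"
          then have "e \<in> E2" using e FE' by blast
          then have "e \<subseteq> {}" using E2 FS e S1 V by blast
          then show False using c2 \<open>e \<in> E2\<close> by blast
        qed
      qed
      then have "t \<in> subtrees V1 E1" using t S1 FS ne conn nc by (auto simp: subtrees_iff)
      then show ?thesis by auto
    next
      assume S2: "S \<subseteq> V2"
      have "F \<subseteq> E2"
      proof
        fix e assume e: "e \<in> F"
        show "e \<in> E2"
        proof (rule ccontr)
          assume "e \<notin> E2"
          then have "e \<in> E1" using e FE' by blast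
          then have "e \<subseteq> {}" using E1 FS e S2 V by blast
          then show False using c2 \<open>e \<in> E1\<close> by blast
        qed
      qed
      then have "t \<in> subtrees V2 E2" using t S2 FS ne conn nc by (auto simp: subtrees_iff)
      then show ?thesis by auto
    qed
  next
    case True
    have uS: "u \<in> S" and wS: "w \<in> S" using True FS by auto
    have r: "(y \<in> V1 \<longrightarrow> (u, y) \<in> (adj (F \<inter> E1))\<^sup>*) \<and> (y \<in> V2 \<longrightarrow> (w, y) \<in> (adj (F \<inter> E2))\<^sup>*)"
      if "y \<in> S" for y
      using reach_split_edge[OF _ FE V u w E1 E2] conn uS that by blast
    have t1: "(S \<inter> V1, F \<inter> E1) \<in> subtrees V1 E1"
      unfolding subtrees_iff
    proof (intro conjI)
      show "\<forall>e\<in>F \<inter> E1. e \<subseteq> S \<inter> V1" using FS E1 by blast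
      show "S \<inter> V1 \<noteq> {}" using uS u by auto
      show "\<forall>x\<in>S \<inter> V1. \<forall>y\<in>S \<inter> V1. (x, y) \<in> (adj (F \<inter> E1))\<^sup>*"
        using r by (meson IntD1 IntD2 rt_sym rtrancl_trans)
      show "\<not> has_cycle (S \<inter> V1) (F \<inter> E1)" using nc cycle_mono[of "S \<inter> V1" "F \<inter> E1" S F] by blast
    qed auto
    have t2: "(S \<inter> V2, F \<inter> E2) \<in> subtrees V2 E2"
      unfolding subtrees_iff
    proof (intro conjI)
      show "\<forall>e\<in>F \<inter> E2. e \<subseteq> S \<inter> V2" using FS E2 by blast
      show "S \<inter> V2 \<noteq> {}" using wS w by auto
      show "\<forall>x\<in>S \<inter> V2. \<forall>y\<in>S \<inter> V2. (x, y) \<in> (adj (F \<inter> E2))\<^sup>*"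
        using r by (meson IntD1 IntD2 rt_sym rtrancl_trans)
      show "\<not> has_cycle (S \<inter> V2) (F \<inter> E2)" using nc cycle_mono[of "S \<inter> V2" "F \<inter> E2" S F] by blast
    qed auto
    have "t = glueE {u, w} ((S \<inter> V1, F \<inter> E1), (S \<inter> V2, F \<inter> E2))"
      using t SV FE True by (auto simp: glueE_def)
    moreover have "((S \<inter> V1, F \<inter> E1), (S \<inter> V2, F \<inter> E2)) \<in> {t\<in>subtrees V1 E1. u \<in> fst t} \<times> {t\<in>subtrees V2 E2. w \<in> fst t}"
      using t1 t2 uS wS u w by auto
    ultimately show ?thesis by blast
  qed
next
  fix t assume "t \<in> ?A \<union> ?B \<union> ?C"
  then consider "t \<in> ?A" | "t \<in> ?B" | "t \<in> ?C" by blast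
  then show "t \<in> ?L"
  proof cases
    case 1 then show ?thesis by (auto intro: subtrees_mono)
  next
    case 2 then show ?thesis by (auto intro: subtrees_mono)
  next
    case 3
    then obtain S1 F1 S2 F2 where t: "t = (S1 \<union> S2, insert {u, w} (F1 \<union> F2))"
      and t1: "(S1, F1) \<in> subtrees V1 E1" "u \<in> S1" and t2: "(S2, F2) \<in> subtrees V2 E2" "w \<in> S2"
      by (auto simp: glueE_def)
    have a1: "S1 \<subseteq> V1" "F1 \<subseteq> E1" "\<forall>e\<in>F1. e \<subseteq> S1" "\<forall>x\<in>S1. \<forall>y\<in>S1. (x, y) \<in> (adj F1)\<^sup>*"
      "\<not> has_cycle S1 F1" using t1 by (auto simp: subtrees_iff)
    have a2: "S2 \<subseteq> V2" "F2 \<subseteq> E2" "\<forall>e\<in>F2. e \<subseteq> S2" "\<forall>x\<in>S2. \<forall>y\<in>S2. (x, y) \<in> (adj F2)\<^sup>*"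
      "\<not> has_cycle S2 F2" using t2 by (auto simp: subtrees_iff)
    let ?F = "insert {u, w} (F1 \<union> F2)"
    have uw: "(u, w) \<in> (adj ?F)\<^sup>*" by (rule adj_step) simp
    have rv: "(x, u) \<in> (adj ?F)\<^sup>*" if "x \<in> S1 \<union> S2" for x
    proof (cases "x \<in> S1")
      case True
      then have "(x, u) \<in> (adj F1)\<^sup>*" using a1(4) t1(2) by blast
      then show ?thesis by (rule rt_mono[rotated]) auto
    next
      case False
      then have "(x, w) \<in> (adj F2)\<^sup>*" using a2(4) t2(2) that by blast
      then have "(x, w) \<in> (adj ?F)\<^sup>*" by (rule rt_mono[rotated]) auto
      then show ?thesis using rt_sym[OF uw] by (rule rtrancl_trans)
    qed
    have I: "S1 \<inter> S2 = {}" using a1(1) a2(1) V by auto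
    have "\<not> has_cycle (S1 \<union> S2) ?F"
      using cycle_edge[OF I t1(2) t2(2) a1(3) a2(3)] a1(5) a2(5) by blast
    moreover have "\<forall>x\<in>S1 \<union> S2. \<forall>y\<in>S1 \<union> S2. (x, y) \<in> (adj ?F)\<^sup>*"
      using rv by (meson rt_sym rtrancl_trans)
    moreover have "S1 \<union> S2 \<subseteq> V1 \<union> V2" "?F \<subseteq> insert {u, w} (E1 \<union> E2)" "\<forall>e\<in>?F. e \<subseteq> S1 \<union> S2"
      using a1 a2 t1 t2 by auto
    ultimately show ?thesis unfolding t subtrees_iff using t1 by auto
  qed
qed


lemma card_filter_Un3:
  assumes "finite A" "finite B" "finite C" "A \<inter> B = {}" "A \<inter> C = {}" "B \<inter> C = {}"
  shows "card {t\<in>A \<union> B \<union> C. P t} = card {t\<in>A. P t} + card {t\<in>B. P t} + card {t\<in>C. P t}"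
proof -
  have "{t\<in>A \<union> B \<union> C. P t} = ({t\<in>A. P t} \<union> {t\<in>B. P t}) \<union> {t\<in>C. P t}" by auto
  moreover have "card (({t\<in>A. P t} \<union> {t\<in>B. P t}) \<union> {t\<in>C. P t}) = card ({t\<in>A. P t} \<union> {t\<in>B. P t}) + card {t\<in>C. P t}"
    by (rule card_Un_disjoint) (use assms in auto)
  moreover have "card ({t\<in>A. P t} \<union> {t\<in>B. P t}) = card {t\<in>A. P t} + card {t\<in>B. P t}"
    by (rule card_Un_disjoint) (use assms in auto)
  ultimately show ?thesis by simp
qed

lemma card_filter_image:
  assumes "inj_on f X" shows "card {t\<in>f ` X. P t} = card {x\<in>X. P (f x)}"
proof -
  have "{t\<in>f ` X. P t} = f ` {x\<in>X. P (f x)}" by auto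
  moreover have "inj_on f {x\<in>X. P (f x)}" using assms by (rule inj_on_subset) auto
  ultimately show ?thesis by (simp add: card_image)
qed

lemma nested_filter: "{t\<in>{t\<in>A. Q t}. P t} = {t\<in>A. Q t \<and> P t}"
  by auto

lemma glue_vertex_count:
  assumes V: "V1 \<inter> V2 = {v}" and E1: "\<forall>e\<in>E1. e \<subseteq> V1" and E2: "\<forall>e\<in>E2. e \<subseteq> V2"
    and c2: "\<forall>e\<in>E1 \<union> E2. card e = 2"
    and fin: "finite V1" "finite V2" "finite E1" "finite E2"
  shows "card {t\<in>subtrees (V1 \<union> V2) (E1 \<union> E2). P t} = card {t\<in>subtrees V1 E1. v \<notin> fst t \<and> P t}
    + card {t\<in>subtrees V2 E2. v \<notin> fst t \<and> P t}
    + card {p\<in>{t\<in>subtrees V1 E1. v \<in> fst t} \<times> {t\<in>subtrees V2 E2. v \<in> fst t}. P (glueV p)}"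
proof -
  let ?X = "{t\<in>subtrees V1 E1. v \<in> fst t} \<times> {t\<in>subtrees V2 E2. v \<in> fst t}"
  have inj: "inj_on glueV ?X"
  proof (rule inj_on_inverseI[where g = "\<lambda>t. ((fst t \<inter> V1, snd t \<inter> E1), (fst t \<inter> V2, snd t \<inter> E2))"])
    fix p assume p: "p \<in> ?X"
    obtain S1 F1 S2 F2 where pe: "p = ((S1, F1), (S2, F2))" by (metis prod.collapse)
    have a: "(S1, F1) \<in> subtrees V1 E1" "v \<in> S1" "(S2, F2) \<in> subtrees V2 E2" "v \<in> S2"
      using p pe by auto
    have s1: "S1 \<subseteq> V1" "F1 \<subseteq> E1" "S2 \<subseteq> V2" "F2 \<subseteq> E2" using a by (auto simp: subtrees_iff)
    have "(S1 \<union> S2) \<inter> V1 = S1" using s1 V a by auto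
    moreover have "(S1 \<union> S2) \<inter> V2 = S2" using s1 V a by auto
    moreover have "F2 \<inter> E1 = {}"
    proof (rule ccontr)
      assume "F2 \<inter> E1 \<noteq> {}"
      then obtain e where e: "e \<in> F2" "e \<in> E1" by auto
      have "e \<subseteq> V1" using E1 e(2) by blast
      moreover have "e \<subseteq> V2" using E2 s1 e(1) by blast
      ultimately have "e \<subseteq> {v}" using V by blast
      then have "card e \<le> 1" using card_mono[of "{v}" e] by simp
      then show False using c2 e by auto
    qed
    moreover have "F1 \<inter> E2 = {}"
    proof (rule ccontr)
      assume "F1 \<inter> E2 \<noteq> {}"
      then obtain e where e: "e \<in> F1" "e \<in> E2" by auto
      have "e \<subseteq> V2" using E2 e(2) by blast
      moreover have "e \<subseteq> V1" using E1 s1 e(1) by blast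
      ultimately have "e \<subseteq> {v}" using V by blast
      then have "card e \<le> 1" using card_mono[of "{v}" e] by simp
      then show False using c2 e by auto
    qed
    ultimately show "((fst (glueV p) \<inter> V1, snd (glueV p) \<inter> E1), (fst (glueV p) \<inter> V2, snd (glueV p) \<inter> E2)) = p"
      using pe s1 by (auto simp: glueV_def)
  qed
  have fT1: "finite (subtrees V1 E1)" and fT2: "finite (subtrees V2 E2)" using fin finite_subtrees by auto
  have "card {t\<in>subtrees (V1 \<union> V2) (E1 \<union> E2). P t} = card {t\<in>{t\<in>subtrees V1 E1. v \<notin> fst t}. P t}
    + card {t\<in>{t\<in>subtrees V2 E2. v \<notin> fst t}. P t} + card {t\<in>glueV ` ?X. P t}"
    unfolding glue_vertex[OF V E1 E2 c2]
  proof (rule card_filter_Un3)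
    show "finite {t \<in> subtrees V1 E1. v \<notin> fst t}" using fT1 by auto
    show "finite {t \<in> subtrees V2 E2. v \<notin> fst t}" using fT2 by auto
    show "finite (glueV ` ?X)" using fT1 fT2 by auto
    show "{t \<in> subtrees V1 E1. v \<notin> fst t} \<inter> {t \<in> subtrees V2 E2. v \<notin> fst t} = {}"
    proof (rule ccontr)
      assume "\<not> ?thesis"
      then obtain S F where "(S, F) \<in> subtrees V1 E1" "(S, F) \<in> subtrees V2 E2" "v \<notin> S" by auto
      then show False using V by (auto simp: subtrees_iff)
    qed
    show "{t \<in> subtrees V1 E1. v \<notin> fst t} \<inter> glueV ` ?X = {}" by (auto simp: glueV_def)
    show "{t \<in> subtrees V2 E2. v \<notin> fst t} \<inter> glueV ` ?X = {}" by (auto simp: glueV_def)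
  qed
  also have "card {t\<in>glueV ` ?X. P t} = card {p\<in>?X. P (glueV p)}" by (rule card_filter_image[OF inj])
  finally show ?thesis by (simp only: nested_filter)
qed

lemma glue_edge_count:
  assumes V: "V1 \<inter> V2 = {}" and u: "u \<in> V1" and w: "w \<in> V2"
    and E1: "\<forall>e\<in>E1. e \<subseteq> V1" and E2: "\<forall>e\<in>E2. e \<subseteq> V2"
    and c2: "\<forall>e\<in>E1 \<union> E2. e \<noteq> {}"
    and fin: "finite V1" "finite V2" "finite E1" "finite E2"
  shows "card {t\<in>subtrees (V1 \<union> V2) (insert {u, w} (E1 \<union> E2)). P t} = card {t\<in>subtrees V1 E1. P t}
    + card {t\<in>subtrees V2 E2. P t}
    + card {p\<in>{t\<in>subtrees V1 E1. u \<in> fst t} \<times> {t\<in>subtrees V2 E2. w \<in> fst t}. P (glueE {u, w} p)}"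
proof -
  let ?X = "{t\<in>subtrees V1 E1. u \<in> fst t} \<times> {t\<in>subtrees V2 E2. w \<in> fst t}"
  have inj: "inj_on (glueE {u, w}) ?X"
  proof (rule inj_on_inverseI[where g = "\<lambda>t. ((fst t \<inter> V1, snd t \<inter> E1), (fst t \<inter> V2, snd t \<inter> E2))"])
    fix p assume p: "p \<in> ?X"
    obtain S1 F1 S2 F2 where pe: "p = ((S1, F1), (S2, F2))" by (metis prod.collapse)
    have a: "(S1, F1) \<in> subtrees V1 E1" "(S2, F2) \<in> subtrees V2 E2"
      using p pe by auto
    have s1: "S1 \<subseteq> V1" "F1 \<subseteq> E1" "S2 \<subseteq> V2" "F2 \<subseteq> E2" using a by (auto simp: subtrees_iff)
    have "(S1 \<union> S2) \<inter> V1 = S1" using s1 V by auto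
    moreover have "(S1 \<union> S2) \<inter> V2 = S2" using s1 V by auto
    moreover have "F2 \<inter> E1 = {}"
    proof (rule ccontr)
      assume "F2 \<inter> E1 \<noteq> {}"
      then obtain e where e: "e \<in> F2" "e \<in> E1" by auto
      have "e \<subseteq> V1" using E1 e(2) by blast
      moreover have "e \<subseteq> V2" using E2 s1 e(1) by blast
      ultimately have "e \<subseteq> {}" using V by blast
      then show False using c2 e by auto
    qed
    moreover have "F1 \<inter> E2 = {}"
    proof (rule ccontr)
      assume "F1 \<inter> E2 \<noteq> {}"
      then obtain e where e: "e \<in> F1" "e \<in> E2" by auto
      have "e \<subseteq> V2" using E2 e(2) by blast
      moreover have "e \<subseteq> V1" using E1 s1 e(1) by blast
      ultimately have "e \<subseteq> {}" using V by blast
      then show False using c2 e by auto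
    qed
    moreover have "{u, w} \<notin> E1" using E1 w V by blast
    moreover have "{u, w} \<notin> E2" using E2 u V by blast
    ultimately show "((fst (glueE {u, w} p) \<inter> V1, snd (glueE {u, w} p) \<inter> E1), (fst (glueE {u, w} p) \<inter> V2, snd (glueE {u, w} p) \<inter> E2)) = p"
      using pe s1 by (auto simp: glueE_def)
  qed
  have fT1: "finite (subtrees V1 E1)" and fT2: "finite (subtrees V2 E2)" using fin finite_subtrees by auto
  have "card {t\<in>subtrees (V1 \<union> V2) (insert {u, w} (E1 \<union> E2)). P t} = card {t\<in>subtrees V1 E1. P t}
    + card {t\<in>subtrees V2 E2. P t} + card {t\<in>glueE {u, w} ` ?X. P t}"
    unfolding glue_edge[OF V u w E1 E2 c2]
  proof (rule card_filter_Un3)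
    show "finite (subtrees V1 E1)" using fT1 by auto
    show "finite (subtrees V2 E2)" using fT2 by auto
    show "finite (glueE {u, w} ` ?X)" using fT1 fT2 by auto
    show "subtrees V1 E1 \<inter> subtrees V2 E2 = {}"
    proof (rule ccontr)
      assume "\<not> ?thesis"
      then obtain S F where "(S, F) \<in> subtrees V1 E1" "(S, F) \<in> subtrees V2 E2" by auto
      then show False using V by (auto simp: subtrees_iff)
    qed
    show "subtrees V1 E1 \<inter> glueE {u, w} ` ?X = {}"
    proof (rule ccontr)
      assume "\<not> ?thesis"
      then obtain t where "t \<in> subtrees V1 E1" "t \<in> glueE {u, w} ` ?X" by blast
      then obtain p where "p \<in> ?X" "glueE {u, w} p \<in> subtrees V1 E1" by blast
      then have "w \<in> fst (glueE {u, w} p)" "fst (glueE {u, w} p) \<subseteq> V1"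
        by (auto simp: glueE_def subtrees_def is_subgraph_def)
      then show False using w V by auto
    qed
    show "subtrees V2 E2 \<inter> glueE {u, w} ` ?X = {}"
    proof (rule ccontr)
      assume "\<not> ?thesis"
      then obtain t where "t \<in> subtrees V2 E2" "t \<in> glueE {u, w} ` ?X" by blast
      then obtain p where "p \<in> ?X" "glueE {u, w} p \<in> subtrees V2 E2" by blast
      then have "u \<in> fst (glueE {u, w} p)" "fst (glueE {u, w} p) \<subseteq> V2"
        by (auto simp: glueE_def subtrees_def is_subgraph_def)
      then show False using u V by auto
    qed
  qed
  also have "card {t\<in>glueE {u, w} ` ?X. P t} = card {p\<in>?X. P (glueE {u, w} p)}" by (rule card_filter_image[OF inj])
  finally show ?thesis .
qed



definition pedges :: "(nat \<Rightarrow> 'a) \<Rightarrow> nat \<Rightarrow> nat \<Rightarrow> 'a set set" where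
  "pedges g a b = {{g i, g (Suc i)} | i. a \<le> i \<and> i < b}"

lemma inj_eq: assumes "inj_on g {0..<(m::nat)}" "i < m" "j < m" shows "g i = g j \<longleftrightarrow> i = j"
proof
  assume "g i = g j"
  then show "i = j" using inj_onD[OF assms(1), of i j] assms(2,3) by simp
qed simp

lemma pred_mod: assumes "(p::nat) < L" shows "(p + L - 1) mod L = (if p = 0 then L - 1 else p - 1)"
proof (cases "p = 0")
  case True then show ?thesis using assms by simp
next
  case False
  then have "(p + L - 1) mod L = ((p - 1) + L) mod L" by (simp add: Suc_diff_Suc)
  also have "\<dots> = p - 1" using assms by simp
  finally show ?thesis using False by simp
qed

lemma path_tree:
  assumes inj: "inj_on g {0..<m}" and ab: "a \<le> b" "b < m"
  shows "is_tree (g ` {a..b}) (pedges g a b)"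
proof -
  let ?F = "pedges g a b"
  have r: "(g a, g i) \<in> (adj ?F)\<^sup>*" if "a \<le> i" "i \<le> b" for i
    using that
  proof (induction i)
    case 0 then show ?case by simp
  next
    case (Suc i)
    show ?case
    proof (cases "a = Suc i")
      case True then show ?thesis by simp
    next
      case False
      then have "(g a, g i) \<in> (adj ?F)\<^sup>*" using Suc by simp
      moreover have "(g i, g (Suc i)) \<in> adj ?F" using Suc False by (auto simp: adj_def pedges_def)
      ultimately show ?thesis by (rule rtrancl_into_rtrancl)
    qed
  qed
  have conn: "graph_connected (g ` {a..b}) ?F"
    unfolding conn_iff
  proof (intro conjI ballI)
    show "g ` {a..b} \<noteq> {}" using ab by auto
    fix x y assume "x \<in> g ` {a..b}" "y \<in> g ` {a..b}"
    then obtain i j where "x = g i" "y = g j" "i \<in> {a..b}" "j \<in> {a..b}" by auto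
    then show "(x, y) \<in> (adj ?F)\<^sup>*" using r by (meson atLeastAtMost_iff rt_sym rtrancl_trans)
  qed
  have nc: "\<not> has_cycle (g ` {a..b}) ?F"
  proof
    assume "has_cycle (g ` {a..b}) ?F"
    then obtain vs where L3: "3 \<le> length vs" and d: "distinct vs" and sv: "set vs \<subseteq> g ` {a..b}"
      and ed: "\<forall>i<length vs. {vs ! i, vs ! ((i + 1) mod length vs)} \<in> ?F"
      unfolding has_cycle_def by blast
    let ?L = "length vs"
    have L0: "0 < ?L" using L3 by linarith
    define I where "I = {i \<in> {a..b}. g i \<in> set vs}"
    have fI: "finite I" by (simp add: I_def)
    have "vs ! 0 \<in> set vs" using L0 by simp
    then have "vs ! 0 \<in> g ` {a..b}" using sv by (rule subsetD[rotated])
    then obtain i0 where "i0 \<in> {a..b}" "g i0 = vs ! 0" by (metis imageE)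
    then have "i0 \<in> I" using L0 by (auto simp: I_def)
    then have neI: "I \<noteq> {}" by auto
    define M where "M = Max I"
    have MI: "M \<in> I" using fI neI by (simp add: M_def)
    have Mmax: "j \<le> M" if "j \<in> I" for j using fI that by (simp add: M_def)
    have "g M \<in> set vs" using MI by (simp add: I_def)
    then obtain p where p: "p < ?L" "vs ! p = g M" by (metis in_set_conv_nth)
    have nb: "y = g (M - 1)" if "{g M, y} \<in> ?F" "y \<in> set vs" for y
    proof -
      have "y \<in> g ` {a..b}" using that(2) sv by (rule subsetD[rotated])
      then obtain j where j: "j \<in> {a..b}" "y = g j" by (metis imageE)
      then have jI: "j \<in> I" using that by (auto simp: I_def)
      have "\<exists>i. {g M, y} = {g i, g (Suc i)} \<and> a \<le> i \<and> i < b" using that(1) by (simp add: pedges_def)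
      then obtain i where i: "a \<le> i" "i < b" "{g M, y} = {g i, g (Suc i)}" by auto
      have Mm: "M < m" using MI ab by (auto simp: I_def)
      have jm: "j < m" using j ab by auto
      have "g M = g i \<and> y = g (Suc i) \<or> g M = g (Suc i) \<and> y = g i" using i(3) by (auto simp: doubleton_eq_iff)
      then show ?thesis
      proof
        assume "g M = g i \<and> y = g (Suc i)"
        then have "g j = g (Suc i)" using j by simp
        then have "j = Suc i" using inj_eq[OF inj, of j "Suc i"] jm i(2) ab(2) by simp
        moreover have "M = i" using inj_eq[OF inj, of M i] Mm i(2) ab(2) \<open>g M = g i \<and> y = g (Suc i)\<close> by simp
        ultimately show ?thesis using Mmax[OF jI] by simp
      next
        assume h: "g M = g (Suc i) \<and> y = g i"
        then have "M = Suc i" using inj_eq[OF inj, of M "Suc i"] Mm i(2) ab(2) by simp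
        then show ?thesis using h by simp
      qed
    qed
    have q1: "{g M, vs ! ((p + 1) mod ?L)} \<in> ?F" using ed p by auto
    have q0a: "{vs ! ((p + ?L - 1) mod ?L), vs ! (((p + ?L - 1) mod ?L + 1) mod ?L)} \<in> ?F"
      using ed L0 by simp
    have "((p + ?L - 1) mod ?L + 1) mod ?L = p"
    proof (cases "p = 0")
      case True
      then show ?thesis using pred_mod[OF p(1)] L0 by simp
    next
      case False
      then show ?thesis using pred_mod[OF p(1)] p(1) by simp
    qed
    then have q0: "{g M, vs ! ((p + ?L - 1) mod ?L)} \<in> ?F" using q0a p by (simp add: insert_commute)
    have "vs ! ((p + 1) mod ?L) = g (M - 1)" using nb[OF q1] L0 by simp
    moreover have "vs ! ((p + ?L - 1) mod ?L) = g (M - 1)" using nb[OF q0] L0 by simp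
    ultimately have "(p + 1) mod ?L = (p + ?L - 1) mod ?L" using d L0 by (intro dist_idx) auto
    then have "(if p + 1 = ?L then 0 else p + 1) = (if p = 0 then ?L - 1 else p - 1)"
      using pred_mod[OF p(1)] suc_mod[OF p(1)] by simp
    then show False using L3 p(1) by (cases "p = 0"; cases "p + 1 = ?L") auto
  qed
  show ?thesis using conn nc by (simp add: is_tree_def)
qed

lemma path_conn:
  assumes inj: "inj_on g {0..<m}" and SV: "S \<subseteq> g ` {0..<m}" and FE: "F \<subseteq> pedges g 0 (m - 1)"
    and FS: "\<forall>e\<in>F. e \<subseteq> S" and conn: "graph_connected S F"
  shows "\<exists>a b. a \<le> b \<and> b < m \<and> S = g ` {a..b} \<and> F = pedges g a b"
proof -
  define I where "I = {i. i < m \<and> g i \<in> S}"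
  have SI: "S = g ` I"
  proof
    show "S \<subseteq> g ` I"
    proof
      fix x assume x: "x \<in> S"
      then have "x \<in> g ` {0..<m}" using SV by (rule subsetD[rotated])
      then obtain i where "i < m" "x = g i" by auto
      then show "x \<in> g ` I" using x by (auto simp: I_def)
    qed
  qed (auto simp: I_def)
  have fI: "finite I" by (rule finite_subset[of _ "{..<m}"]) (auto simp: I_def)
  have neI: "I \<noteq> {}" using conn SI by (auto simp: conn_iff)
  define a where "a = Min I"
  define b where "b = Max I"
  have aI: "a \<in> I" and bI: "b \<in> I" using fI neI by (auto simp: a_def b_def)
  have amin: "a \<le> j" and bmax: "j \<le> b" if "j \<in> I" for j using fI that by (auto simp: a_def b_def)
  have ab: "a \<le> b" using amin[OF bI] .
  have bm: "b < m" using bI by (simp add: I_def)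
  have gaS: "g a \<in> S" and gbS: "g b \<in> S" using aI bI by (auto simp: I_def)
  have inI: "j \<in> I" if "g j \<in> S" "j < m" for j using that by (simp add: I_def)
  have claim: "{g i, g (Suc i)} \<in> F" if i: "a \<le> i" "i < b" for i
  proof (rule ccontr)
    assume nF: "{g i, g (Suc i)} \<notin> F"
    define A where "A = g ` {0..i}"
    have cl: "y \<in> A" if xy: "(x, y) \<in> adj F" and xA: "x \<in> A" for x y
    proof -
      have xyF: "{x, y} \<in> F" using xy by (simp add: adj_def)
      then have "{x, y} \<in> pedges g 0 (m - 1)" using FE by (rule subsetD[rotated])
      then have "\<exists>k. {x, y} = {g k, g (Suc k)} \<and> k < m - 1" by (simp add: pedges_def)
      then obtain k where k: "{x, y} = {g k, g (Suc k)}" "k < m - 1" by auto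
      obtain k' where k': "k' \<le> i" "x = g k'" using xA by (auto simp: A_def)
      have k'm: "k' < m" using k' i bm by simp
      have "x = g k \<and> y = g (Suc k) \<or> x = g (Suc k) \<and> y = g k" using k(1) by (auto simp: doubleton_eq_iff)
      then show "y \<in> A"
      proof
        assume h: "x = g k \<and> y = g (Suc k)"
        then have "k' = k" using inj_eq[OF inj, of k' k] k'm k(2) k' by simp
        show ?thesis
        proof (cases "k = i")
          case True
          then show ?thesis using xyF nF h by simp
        next
          case False
          then show ?thesis using h \<open>k' = k\<close> k' by (auto simp: A_def)
        qed
      next
        assume h: "x = g (Suc k) \<and> y = g k"
        then have "k' = Suc k" using inj_eq[OF inj, of k' "Suc k"] k'm k(2) k' by simp
        then show ?thesis using h k' by (auto simp: A_def)
      qed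
    qed
    have "(g a, g b) \<in> (adj F)\<^sup>*" using conn gaS gbS by (auto simp: conn_iff)
    moreover have "g a \<in> A" using i by (auto simp: A_def)
    ultimately have "g b \<in> A" using cl by (rule reach_closed)
    then obtain k' where "k' \<le> i" "g b = g k'" by (auto simp: A_def)
    then have "b = k'" using inj_eq[OF inj, of b k'] bm i by simp
    then show False using \<open>k' \<le> i\<close> i by simp
  qed
  have "S = g ` {a..b}"
  proof
    show "S \<subseteq> g ` {a..b}" unfolding SI using amin bmax by auto
    show "g ` {a..b} \<subseteq> S"
    proof
      fix x assume "x \<in> g ` {a..b}"
      then obtain j where j: "a \<le> j" "j \<le> b" "x = g j" by auto
      show "x \<in> S"
      proof (cases "j = b")
        case True then show ?thesis using j gbS by simp
      next
        case False
        then have "{g j, g (Suc j)} \<in> F" using claim j by simp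
        then show ?thesis using FS j by auto
      qed
    qed
  qed
  moreover have "F = pedges g a b"
  proof
    show "pedges g a b \<subseteq> F" using claim by (auto simp: pedges_def)
    show "F \<subseteq> pedges g a b"
    proof
      fix e assume e: "e \<in> F"
      then have "e \<in> pedges g 0 (m - 1)" using FE by (rule subsetD[rotated])
      then have "\<exists>k. e = {g k, g (Suc k)} \<and> k < m - 1" by (simp add: pedges_def)
      then obtain k where k: "e = {g k, g (Suc k)}" "k < m - 1" by auto
      have "g k \<in> S" "g (Suc k) \<in> S" using FS e k by auto
      then have "k \<in> I" "Suc k \<in> I" using inI k by auto
      then have "a \<le> k" "Suc k \<le> b" using amin bmax by auto
      then have "a \<le> k" "k < b" by auto
      then show "e \<in> pedges g a b" using k by (auto simp: pedges_def)
    qed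
  qed
  ultimately show ?thesis using ab bm by blast
qed



definition hexV :: "(nat \<Rightarrow> 'a) \<Rightarrow> 'a set" where "hexV h = h ` {0..<6}"
definition hexE :: "(nat \<Rightarrow> 'a) \<Rightarrow> 'a set set" where
  "hexE h = {{h j, h ((j + 1) mod 6)} | j. j < 6}"

definition arcV :: "nat \<Rightarrow> nat \<Rightarrow> nat set" where
  "arcV a k = (\<lambda>i. (a + i) mod 6) ` {0..k}"
definition arcE :: "nat \<Rightarrow> nat \<Rightarrow> nat set set" where
  "arcE a k = (\<lambda>i. {(a + i) mod 6, (a + i + 1) mod 6}) ` {0..<k}"
definition Arcs0 :: "(nat set \<times> nat set set) set" where
  "Arcs0 = (\<lambda>(a,k). (arcV a k, arcE a k)) ` ({0..<6} \<times> {0..<6})"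
definition Phi :: "(nat \<Rightarrow> 'a) \<Rightarrow> nat set \<times> nat set set \<Rightarrow> 'a set \<times> 'a set set" where
  "Phi h t = (h ` fst t, (\<lambda>e. h ` e) ` snd t)"

lemma pedges_image: "pedges g a b = (\<lambda>i. {g i, g (Suc i)}) ` {a..<b}"
  by (auto simp: pedges_def)

lemma arc_eq: "Phi h (arcV c k, arcE c k) =
   ((\<lambda>i. h ((c + i) mod 6)) ` {0..k}, pedges (\<lambda>i. h ((c + i) mod 6)) 0 k)"
  by (simp add: Phi_def arcV_def arcE_def pedges_image image_image)

lemma mod12: "(x::nat) < 12 \<Longrightarrow> x mod 6 = (if x < 6 then x else x - 6)"
  by (simp add: mod_if)

lemma rot_eq: assumes "(c + i) mod 6 = (c + j) mod 6" "i < 6" "j < (6::nat)" shows "i = j"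
proof -
  have "(c mod 6 + i) mod 6 = (c mod 6 + j) mod 6" using assms(1) by (simp add: mod_add_left_eq)
  moreover have "c mod 6 < 6" by simp
  ultimately show ?thesis using assms(2,3) mod12[of "c mod 6 + i"] mod12[of "c mod 6 + j"] by (auto split: if_splits)
qed

lemma inj_rot: fixes h :: "nat \<Rightarrow> 'a" assumes "inj_on h {0..<6}" shows "inj_on (\<lambda>i. h ((c + i) mod 6)) {0..<6}"
proof (rule inj_onI)
  fix i j assume ij: "i \<in> {0..<6}" "j \<in> {0..<6}" and e: "h ((c + i) mod 6) = h ((c + j) mod 6)"
  have "(c + i) mod 6 = (c + j) mod 6" using inj_onD[OF assms e] by simp
  then show "i = j" using rot_eq[of c i j] ij by simp
qed

lemma shift_img: "(a::nat) \<le> b \<Longrightarrow> f ` {a..b} = (\<lambda>i. f (a + i)) ` {0..b - a}"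
proof (intro equalityI subsetI)
  fix y assume "a \<le> b" "y \<in> f ` {a..b}"
  then obtain x where x: "a \<le> x" "x \<le> b" "y = f x" by auto
  then have "y = f (a + (x - a))" "x - a \<in> {0..b - a}" by auto
  then show "y \<in> (\<lambda>i. f (a + i)) ` {0..b - a}" by blast
next
  fix y assume "a \<le> b" "y \<in> (\<lambda>i. f (a + i)) ` {0..b - a}"
  then obtain i where "i \<le> b - a" "y = f (a + i)" by auto
  then show "y \<in> f ` {a..b}" using \<open>a \<le> b\<close> by auto
qed

lemma shift_img2: "(a::nat) \<le> b \<Longrightarrow> f ` {a..<b} = (\<lambda>i. f (a + i)) ` {0..<b - a}"
proof (intro equalityI subsetI)
  fix y assume "a \<le> b" "y \<in> f ` {a..<b}"
  then obtain x where x: "a \<le> x" "x < b" "y = f x" by auto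
  then have "y = f (a + (x - a))" "x - a \<in> {0..<b - a}" by auto
  then show "y \<in> (\<lambda>i. f (a + i)) ` {0..<b - a}" by blast
next
  fix y assume "a \<le> b" "y \<in> (\<lambda>i. f (a + i)) ` {0..<b - a}"
  then obtain i where "i < b - a" "y = f (a + i)" by auto
  then show "y \<in> f ` {a..<b}" using \<open>a \<le> b\<close> by auto
qed

lemma mod_facts_all: "\<forall>k\<in>{0..<6::nat}. \<forall>j\<in>{0..<6::nat}. (j + 1 + (k + 5 - j) mod 6) mod 6 = k \<and> (k \<noteq> j \<longrightarrow> (k + 5 - j) mod 6 < 5) \<and>
    (j + 1 + Suc ((k + 5 - j) mod 6)) mod 6 = (k + 1) mod 6"
  by code_simp

lemma mod_facts:
  assumes "k < 6" "j < (6::nat)"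
  shows "(j + 1 + (k + 5 - j) mod 6) mod 6 = k" "k \<noteq> j \<Longrightarrow> (k + 5 - j) mod 6 < 5"
    "(j + 1 + Suc ((k + 5 - j) mod 6)) mod 6 = (k + 1) mod 6"
  using mod_facts_all assms by auto

lemma Arcs0_sub: "t \<in> Arcs0 \<Longrightarrow> fst t \<subseteq> {0..<6} \<and> snd t \<subseteq> Pow {0..<6}"
  by (auto simp: Arcs0_def arcV_def arcE_def)

lemma hex_sup:
  fixes h :: "nat \<Rightarrow> 'a"
  assumes inj: "inj_on h {0..<6}" and c: "c < 6" and k: "k < 6"
  shows "Phi h (arcV c k, arcE c k) \<in> subtrees (hexV h) (hexE h)"
proof -
  define g where "g = (\<lambda>i. h ((c + i) mod 6))"
  have tr: "is_tree (g ` {0..k}) (pedges g 0 k)"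
    using path_tree[OF inj_rot[OF inj, of c], of 0 k] k by (simp add: g_def)
  have "g ` {0..k} \<subseteq> hexV h" by (auto simp: g_def hexV_def)
  moreover have "pedges g 0 k \<subseteq> hexE h"
  proof
    fix e assume "e \<in> pedges g 0 k"
    then obtain i where i: "i < k" "e = {g i, g (Suc i)}" by (auto simp: pedges_def)
    have "(c + Suc i) mod 6 = ((c + i) mod 6 + 1) mod 6" by (simp add: mod_simps)
    then have "e = {h ((c + i) mod 6), h (((c + i) mod 6 + 1) mod 6)}" using i by (simp add: g_def)
    then show "e \<in> hexE h" unfolding hexE_def by (intro CollectI exI[of _ "(c + i) mod 6"]) simp
  qed
  moreover have "\<forall>e\<in>pedges g 0 k. e \<subseteq> g ` {0..k}" by (auto simp: pedges_def)
  ultimately show ?thesis using tr unfolding arc_eq g_def[symmetric] subtrees_def is_subgraph_def by auto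
qed

lemma hex_cycle:
  fixes h :: "nat \<Rightarrow> 'a"
  assumes inj: "inj_on h {0..<6}" and FS: "\<forall>e\<in>F. e \<subseteq> S" and all: "hexE h \<subseteq> F"
  shows "has_cycle S F"
proof -
  define vs where "vs = map h [0..<6]"
  have len: "length vs = 6" by (simp add: vs_def)
  have nth: "vs ! i = h i" if "i < 6" for i using that by (simp add: vs_def)
  have d: "distinct vs" unfolding vs_def using inj by (simp add: distinct_map)
  have edge: "{h j, h ((j + 1) mod 6)} \<in> F" if "j < 6" for j
    using all that unfolding hexE_def by blast
  have "set vs \<subseteq> S"
  proof
    fix x assume "x \<in> set vs"
    then obtain j where j: "j < 6" "x = h j" by (auto simp: vs_def)
    then show "x \<in> S" using edge[OF j(1)] FS by auto
  qed
  moreover have "\<forall>i<length vs. {vs ! i, vs ! ((i + 1) mod length vs)} \<in> F"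
    using edge nth len by simp
  ultimately show ?thesis unfolding has_cycle_def using len d by (intro exI[of _ vs]) simp
qed

lemma hex_sub_dir:
  fixes h :: "nat \<Rightarrow> 'a"
  assumes inj: "inj_on h {0..<6}" and t: "t \<in> subtrees (hexV h) (hexE h)"
  shows "t \<in> Phi h ` Arcs0"
proof -
  obtain S F where tSF: "t = (S, F)" by (cases t)
  have SV: "S \<subseteq> hexV h" and FE: "F \<subseteq> hexE h" and FS: "\<forall>e\<in>F. e \<subseteq> S" and ne: "S \<noteq> {}"
    and conn: "\<forall>x\<in>S. \<forall>y\<in>S. (x, y) \<in> (adj F)\<^sup>*" and nc: "\<not> has_cycle S F"
    using t tSF by (auto simp: subtrees_iff)
  have "\<not> hexE h \<subseteq> F" using hex_cycle[OF inj FS] nc by blast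
  then obtain e where "e \<in> hexE h" "e \<notin> F" by blast
  then obtain j where j: "j < 6" "{h j, h ((j + 1) mod 6)} \<notin> F" unfolding hexE_def by blast
  define g where "g = (\<lambda>i. h ((j + 1 + i) mod 6))"
  have ginj: "inj_on g {0..<6}" unfolding g_def by (rule inj_rot[OF inj])
  have hk: "h k = g ((k + 5 - j) mod 6)" if "k < 6" for k
    using mod_facts(1)[OF that j(1)] by (simp add: g_def)
  have SV': "S \<subseteq> g ` {0..<6}"
  proof
    fix x assume "x \<in> S"
    then have "x \<in> h ` {0..<6}" using SV unfolding hexV_def by (rule subsetD[rotated])
    then obtain k where k: "k < 6" "x = h k" by auto
    then show "x \<in> g ` {0..<6}" using hk[OF k(1)] by auto
  qed
  have FE': "F \<subseteq> pedges g 0 (6 - 1)"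
  proof
    fix e assume e: "e \<in> F"
    then have "e \<in> hexE h" using FE by (rule subsetD[rotated])
    then obtain k where k: "k < 6" "e = {h k, h ((k + 1) mod 6)}" unfolding hexE_def by blast
    have kj: "k \<noteq> j" using k e j by auto
    define i where "i = (k + 5 - j) mod 6"
    have i5: "i < 5" using mod_facts(2)[OF k(1) j(1) kj] by (simp add: i_def)
    have "g i = h k" using hk[OF k(1)] by (simp add: i_def)
    moreover have "g (Suc i) = h ((k + 1) mod 6)" using mod_facts(3)[OF k(1) j(1)] by (simp add: g_def i_def)
    ultimately have "e = {g i, g (Suc i)}" using k by simp
    then show "e \<in> pedges g 0 (6 - 1)" using i5 unfolding pedges_def by auto
  qed
  have "graph_connected S F" using ne conn by (simp add: conn_iff)
  then obtain a b where ab: "a \<le> b" "b < 6" "S = g ` {a..b}" "F = pedges g a b"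
    using path_conn[OF ginj SV' FE' FS] by blast
  define c where "c = (j + 1 + a) mod 6"
  have geq: "(\<lambda>i. h ((c + i) mod 6)) = (\<lambda>i. g (a + i))"
    by (rule ext) (simp add: c_def g_def mod_add_left_eq add.assoc)
  have "pedges g a b = pedges (\<lambda>i. g (a + i)) 0 (b - a)"
    unfolding pedges_image using shift_img2[OF ab(1), of "\<lambda>i. {g i, g (Suc i)}"] by simp
  then have "Phi h (arcV c (b - a), arcE c (b - a)) = (S, F)"
    unfolding arc_eq geq using ab shift_img[OF ab(1), of g] by simp
  moreover have "(arcV c (b - a), arcE c (b - a)) \<in> Arcs0"
    unfolding Arcs0_def using ab by (intro image_eqI[of _ _ "(c, b - a)"]) (auto simp: c_def)
  ultimately show ?thesis using tSF by (metis image_eqI)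
qed

lemma hex_sub:
  fixes h :: "nat \<Rightarrow> 'a"
  assumes inj: "inj_on h {0..<6}"
  shows "subtrees (hexV h) (hexE h) = Phi h ` Arcs0"
proof
  show "subtrees (hexV h) (hexE h) \<subseteq> Phi h ` Arcs0" using hex_sub_dir[OF inj] by blast
  show "Phi h ` Arcs0 \<subseteq> subtrees (hexV h) (hexE h)"
    using hex_sup[OF inj] by (auto simp: Arcs0_def)
qed

lemma Phi_inj:
  fixes h :: "nat \<Rightarrow> 'a"
  assumes inj: "inj_on h {0..<6}"
  shows "inj_on (Phi h) Arcs0"
proof (rule inj_onI)
  fix t t' assume t: "t \<in> Arcs0" and t': "t' \<in> Arcs0" and e: "Phi h t = Phi h t'"
  have s: "fst t \<subseteq> {0..<6}" "snd t \<subseteq> Pow {0..<6}" "fst t' \<subseteq> {0..<6}" "snd t' \<subseteq> Pow {0..<6}"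
    using Arcs0_sub[OF t] Arcs0_sub[OF t'] by auto
  have "h ` fst t = h ` fst t'" using e by (simp add: Phi_def)
  then have 1: "fst t = fst t'" using inj_on_image_eq_iff[OF inj s(1) s(3)] by simp
  have "(\<lambda>e. h ` e) ` snd t = (\<lambda>e. h ` e) ` snd t'" using e by (simp add: Phi_def)
  then have 2: "snd t = snd t'" using inj_on_image_eq_iff[OF inj_on_image_Pow[OF inj] s(2) s(4)] by simp
  show "t = t'" using 1 2 by (simp add: prod_eq_iff)
qed

lemma hex_count:
  fixes h :: "nat \<Rightarrow> 'a"
  assumes inj: "inj_on h {0..<6}"
  shows "card {t\<in>subtrees (hexV h) (hexE h). P (fst t)} = card {t\<in>Arcs0. P (h ` fst t)}"
  unfolding hex_sub[OF inj] card_filter_image[OF Phi_inj[OF inj]] by (simp add: Phi_def)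

lemma arcs_nums: "card Arcs0 = 36 \<and> (\<forall>x\<in>{0..<6}. card (Set.filter (\<lambda>t. x \<in> fst t) Arcs0) = 21) \<and>
  (\<forall>x\<in>{0..<6}. card (Set.filter (\<lambda>t. 0 \<notin> fst t \<and> x \<in> fst t) Arcs0)
     + card (Set.filter (\<lambda>t. 0 \<in> fst t \<and> x \<in> fst t) Arcs0) = 21)"
  unfolding Arcs0_def arcV_def arcE_def by code_simp

definition Bc :: "nat \<Rightarrow> nat" where "Bc x = card {t\<in>Arcs0. 0 \<in> fst t \<and> x \<in> fst t}"

lemma mem_h: "inj_on h {0..<6} \<Longrightarrow> t \<in> Arcs0 \<Longrightarrow> x < 6 \<Longrightarrow> h x \<in> h ` fst t \<longleftrightarrow> x \<in> fst t"
  using inj_on_image_mem_iff[of h "{0..<6}" x "fst t"] Arcs0_sub[of t] by simp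

lemma hex_all:
  fixes h :: "nat \<Rightarrow> 'a"
  assumes inj: "inj_on h {0..<6}"
  shows "card (subtrees (hexV h) (hexE h)) = 36"
  using hex_count[OF inj, of "\<lambda>_. True"] arcs_nums by simp

lemma hex_x:
  fixes h :: "nat \<Rightarrow> 'a"
  assumes inj: "inj_on h {0..<6}" and x: "x < 6"
  shows "card {t\<in>subtrees (hexV h) (hexE h). h x \<in> fst t} = 21"
proof -
  have "card {t\<in>subtrees (hexV h) (hexE h). h x \<in> fst t} = card {t\<in>Arcs0. h x \<in> h ` fst t}"
    by (rule hex_count[OF inj])
  also have "{t\<in>Arcs0. h x \<in> h ` fst t} = Set.filter (\<lambda>t. x \<in> fst t) Arcs0"
    using mem_h[OF inj _ x] by (auto simp: Set.filter_eq)
  finally show ?thesis using arcs_nums x by simp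
qed

lemma hex_0x:
  fixes h :: "nat \<Rightarrow> 'a"
  assumes inj: "inj_on h {0..<6}" and x: "x < 6"
  shows "card {t\<in>subtrees (hexV h) (hexE h). h 0 \<in> fst t \<and> h x \<in> fst t} = Bc x"
proof -
  have m0: "h 0 \<in> h ` fst t \<longleftrightarrow> 0 \<in> fst t" if "t \<in> Arcs0" for t
    using mem_h[OF inj that] by simp
  have "card {t\<in>subtrees (hexV h) (hexE h). h 0 \<in> fst t \<and> h x \<in> fst t} = card {t\<in>Arcs0. h 0 \<in> h ` fst t \<and> h x \<in> h ` fst t}"
    by (rule hex_count[OF inj])
  also have "{t\<in>Arcs0. h 0 \<in> h ` fst t \<and> h x \<in> h ` fst t} = {t\<in>Arcs0. 0 \<in> fst t \<and> x \<in> fst t}"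
    by (rule Collect_cong) (use mem_h[OF inj _ x] m0 in blast)
  finally show ?thesis by (simp add: Bc_def)
qed

lemma hex_n0x:
  fixes h :: "nat \<Rightarrow> 'a"
  assumes inj: "inj_on h {0..<6}" and x: "x < 6"
  shows "card {t\<in>subtrees (hexV h) (hexE h). h 0 \<notin> fst t \<and> h x \<in> fst t} + Bc x = 21"
proof -
  have m0: "h 0 \<in> h ` fst t \<longleftrightarrow> 0 \<in> fst t" if "t \<in> Arcs0" for t
    using mem_h[OF inj that] by simp
  have "card {t\<in>subtrees (hexV h) (hexE h). h 0 \<notin> fst t \<and> h x \<in> fst t} = card {t\<in>Arcs0. h 0 \<notin> h ` fst t \<and> h x \<in> h ` fst t}"
    by (rule hex_count[OF inj])
  also have "{t\<in>Arcs0. h 0 \<notin> h ` fst t \<and> h x \<in> h ` fst t} = Set.filter (\<lambda>t. 0 \<notin> fst t \<and> x \<in> fst t) Arcs0"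
    unfolding Set.filter_eq
    by (rule Collect_cong) (use mem_h[OF inj _ x] m0 in blast)
  moreover have "Bc x = card (Set.filter (\<lambda>t. 0 \<in> fst t \<and> x \<in> fst t) Arcs0)"
    by (simp add: Bc_def Set.filter_eq)
  ultimately show ?thesis using arcs_nums x by simp
qed



lemma hexE_image: "hexE h = (\<lambda>j. {h j, h ((j + 1) mod 6)}) ` {0..<6}"
  by (auto simp: hexE_def)

lemma hex_vertices_Suc: "hex_vertices (Suc n) = hex_vertices n \<union> hexV (\<lambda>j. (n, j))"
  by (auto simp: hex_vertices_def hexV_def)

lemma hex_edges_Suc: "hex_edges (Suc n) = hex_edges n \<union> hexE (\<lambda>j. (n, j))"
  by (auto simp: hex_edges_def hexE_def less_Suc_eq)

lemma conn_Suc: "1 \<le> n \<Longrightarrow> {{(i, exit_pos ds i), (i + 1, 0)} | i. i + 1 < Suc n} =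
   insert {(n - 1, exit_pos ds (n - 1)), (n, 0)} {{(i, exit_pos ds i), (i + 1, 0)} | i. i + 1 < n}"
proof (intro equalityI subsetI)
  fix e assume n: "1 \<le> n" and "e \<in> {{(i, exit_pos ds i), (i + 1, 0)} | i. i + 1 < Suc n}"
  then obtain i where i: "e = {(i, exit_pos ds i), (i + 1, 0)}" "i + 1 < Suc n" by blast
  show "e \<in> insert {(n - 1, exit_pos ds (n - 1)), (n, 0)} {{(i, exit_pos ds i), (i + 1, 0)} | i. i + 1 < n}"
  proof (cases "i + 1 = n")
    case True
    then have "i = n - 1" by simp
    then show ?thesis using i True by simp
  next
    case False
    then show ?thesis using i by auto
  qed
next
  fix e assume n: "1 \<le> n" and "e \<in> insert {(n - 1, exit_pos ds (n - 1)), (n, 0)} {{(i, exit_pos ds i), (i + 1, 0)} | i. i + 1 < n}"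
  then consider "e = {(n - 1, exit_pos ds (n - 1)), (n, 0)}" | "\<exists>i. e = {(i, exit_pos ds i), (i + 1, 0)} \<and> i + 1 < n" by blast
  then show "e \<in> {{(i, exit_pos ds i), (i + 1, 0)} | i. i + 1 < Suc n}"
  proof cases
    case 1
    then show ?thesis using n by (intro CollectI exI[of _ "n - 1"]) simp
  next
    case 2
    then show ?thesis by auto
  qed
qed

lemma PC_vertices_Suc: "PC_vertices (Suc n) ds = PC_vertices n ds \<union> hexV (\<lambda>j. (n, j))"
  by (simp add: PC_vertices_def hex_vertices_Suc)

lemma PC_edges_Suc: "1 \<le> n \<Longrightarrow> PC_edges (Suc n) ds =
   insert {(n - 1, exit_pos ds (n - 1)), (n, 0)} (PC_edges n ds \<union> hexE (\<lambda>j. (n, j)))"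
  unfolding PC_edges_def hex_edges_Suc conn_Suc by auto

lemma SC_vertices_Suc: "SC_vertices (Suc n) ds = SC_vertices n ds \<union> hexV (\<lambda>j. spiro_map ds (n, j))"
  by (simp add: SC_vertices_def hex_vertices_Suc hexV_def image_Un image_image)

lemma SC_edges_Suc: "SC_edges (Suc n) ds = SC_edges n ds \<union> hexE (\<lambda>j. spiro_map ds (n, j))"
  by (simp add: SC_edges_def hex_edges_Suc hexE_image image_Un image_image)

lemma spiro_ne: "j < 6 \<Longrightarrow> j' < 6 \<Longrightarrow> j \<noteq> j' \<Longrightarrow> spiro_map ds (i, j) \<noteq> spiro_map ds (i, j')"
  by (auto simp: spiro_map_def)

lemma spiro_inj: "inj_on (\<lambda>j. spiro_map ds (n, j)) {0..<6}"
  by (rule inj_onI) (use spiro_ne in fastforce)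

lemma pc_inj: "inj_on (\<lambda>j. (n::nat, j)) {0..<6}"
  by (rule inj_onI) simp

lemma fin_hex_vertices: "finite (hex_vertices n)"
  by (rule finite_subset[of _ "{..<n} \<times> {..<6}"]) (auto simp: hex_vertices_def)

lemma hex_edges_image: "hex_edges n = (\<lambda>(i, j). {(i, j), (i, (j + 1) mod 6)}) ` hex_vertices n"
  by (auto simp: hex_edges_def hex_vertices_def)

lemma fin_hex_edges: "finite (hex_edges n)"
  unfolding hex_edges_image using fin_hex_vertices by simp

lemma fin_PC_edges: "finite (PC_edges n ds)"
proof -
  have "{{(i, exit_pos ds i), (i + 1, 0)} | i. i + 1 < n} = (\<lambda>i. {(i, exit_pos ds i), (i + 1, 0)}) ` {i. i + 1 < n}"
    by auto
  moreover have "finite {i. i + 1 < n}" by (rule finite_subset[of _ "{..<n}"]) auto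
  ultimately show ?thesis unfolding PC_edges_def using fin_hex_edges by simp
qed

lemma fin_SC: "finite (SC_vertices n ds)" "finite (SC_edges n ds)"
  unfolding SC_vertices_def SC_edges_def using fin_hex_vertices fin_hex_edges by auto

lemma fin_hex: "finite (hexV h)" "finite (hexE h)"
  unfolding hexV_def hexE_image by auto

definition good :: "nat list \<Rightarrow> nat \<Rightarrow> bool" where
  "good ds N \<longleftrightarrow> (\<forall>i. 0 < i \<longrightarrow> i + 1 < N \<longrightarrow> exit_pos ds i \<in> {1, 2, 3})"

lemma ex_lt: assumes "good ds N" "i + 1 < N" shows "exit_pos ds i < 6"
proof (cases "i = 0")
  case True then show ?thesis by (simp add: exit_pos_def)
next
  case False
  then have "exit_pos ds i \<in> {1, 2, 3}" using assms unfolding good_def by blast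
  then show ?thesis by auto
qed

lemma ex_nz: assumes "good ds N" "0 < i" "i + 1 < N" shows "exit_pos ds i \<noteq> 0"
proof -
  have "exit_pos ds i \<in> {1, 2, 3}" using assms unfolding good_def by blast
  then show ?thesis by auto
qed

lemma PC_edges_in: assumes "good ds N" "n \<le> N" shows "\<forall>e\<in>PC_edges n ds. e \<subseteq> PC_vertices n ds"
proof
  fix e assume "e \<in> PC_edges n ds"
  then consider "e \<in> hex_edges n" | i where "e = {(i, exit_pos ds i), (i + 1, 0)}" "i + 1 < n"
    unfolding PC_edges_def by blast
  then show "e \<subseteq> PC_vertices n ds"
  proof cases
    case 1 then show ?thesis by (auto simp: hex_edges_def PC_vertices_def hex_vertices_def)
  next
    case 2
    then have "exit_pos ds i < 6" using ex_lt[OF assms(1)] assms(2) by simp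
    then show ?thesis using 2 by (auto simp: PC_vertices_def hex_vertices_def)
  qed
qed

lemma PC_edges_ne: "\<forall>e\<in>PC_edges n ds. e \<noteq> {}"
  unfolding PC_edges_def hex_edges_def by auto

lemma SC_vertices_sub: assumes "good ds N" "n \<le> N" shows "SC_vertices n ds \<subseteq> {(i, j). i < n \<and> j < 6}"
proof
  fix v assume "v \<in> SC_vertices n ds"
  then obtain i j where ij: "i < n" "j < 6" "v = spiro_map ds (i, j)"
    by (auto simp: SC_vertices_def hex_vertices_def)
  show "v \<in> {(i, j). i < n \<and> j < 6}"
  proof (cases "j = 0 \<and> i > 0")
    case True
    then have "exit_pos ds (i - 1) < 6" using ex_lt[OF assms(1), of "i - 1"] ij assms(2) by simp
    then show ?thesis using ij True by (auto simp: spiro_map_def)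
  next
    case False
    then show ?thesis using ij by (auto simp: spiro_map_def)
  qed
qed

lemma SC_edges_in: "\<forall>e\<in>SC_edges n ds. e \<subseteq> SC_vertices n ds"
  unfolding SC_edges_def SC_vertices_def hex_edges_def hex_vertices_def by auto

lemma SC_edges_c2: "\<forall>e\<in>SC_edges n ds. card e = 2"
proof
  fix e assume "e \<in> SC_edges n ds"
  then obtain i j where "j < 6" "e = {spiro_map ds (i, j), spiro_map ds (i, (j + 1) mod 6)}"
    unfolding SC_edges_def hex_edges_def by auto
  moreover have "spiro_map ds (i, j) \<noteq> spiro_map ds (i, (j + 1) mod 6)" if "j < 6"
    using spiro_ne[of j "(j + 1) mod 6"] that by (auto simp: mod_Suc)
  ultimately show "card e = 2" by simp
qed

lemma hexE_in: "\<forall>e\<in>hexE h. e \<subseteq> hexV h"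
  unfolding hexE_def hexV_def by auto

lemma hexE_c2: assumes "inj_on h {0..<6}" shows "\<forall>e\<in>hexE h. card e = 2"
proof
  fix e assume "e \<in> hexE h"
  then obtain j where j: "j < 6" "e = {h j, h ((j + 1) mod 6)}" unfolding hexE_def by auto
  have "j \<noteq> (j + 1) mod 6" using j(1) by (auto simp: mod_Suc)
  then have "h j \<noteq> h ((j + 1) mod 6)" using inj_eq[OF assms] j(1) by simp
  then show "card e = 2" using j by simp
qed

lemma hexE_ne: "\<forall>e\<in>hexE h. e \<noteq> {}"
  unfolding hexE_def by auto

lemma sm_n0: "0 < n \<Longrightarrow> spiro_map ds (n, 0) = (n - 1, exit_pos ds (n - 1))"
  by (simp add: spiro_map_def)

lemma sm_fix: assumes "good ds N" "1 \<le> n" "Suc n \<le> N"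
  shows "spiro_map ds (n - 1, exit_pos ds (n - 1)) = (n - 1, exit_pos ds (n - 1))"
proof (cases "n = 1")
  case True then show ?thesis by (simp add: spiro_map_def)
next
  case False
  then have "exit_pos ds (n - 1) \<noteq> 0" using ex_nz[OF assms(1), of "n - 1"] assms by simp
  then show ?thesis by (simp add: spiro_map_def)
qed

lemma SC_inter: assumes g: "good ds N" and n: "1 \<le> n" "Suc n \<le> N"
  shows "SC_vertices n ds \<inter> hexV (\<lambda>j. spiro_map ds (n, j)) = {(n - 1, exit_pos ds (n - 1))}"
proof
  have sub: "SC_vertices n ds \<subseteq> {(i, j). i < n \<and> j < 6}" using SC_vertices_sub[OF g] n by simp
  show "SC_vertices n ds \<inter> hexV (\<lambda>j. spiro_map ds (n, j)) \<subseteq> {(n - 1, exit_pos ds (n - 1))}"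
  proof
    fix v assume v: "v \<in> SC_vertices n ds \<inter> hexV (\<lambda>j. spiro_map ds (n, j))"
    then obtain j where j: "j < 6" "v = spiro_map ds (n, j)" by (auto simp: hexV_def)
    have "fst v < n" using v sub by auto
    then have "j = 0" using j n by (auto simp: spiro_map_def split: if_splits)
    then show "v \<in> {(n - 1, exit_pos ds (n - 1))}" using j n by (simp add: spiro_map_def)
  qed
  have "exit_pos ds (n - 1) < 6" using ex_lt[OF g, of "n - 1"] n by simp
  then have "(n - 1, exit_pos ds (n - 1)) \<in> SC_vertices n ds"
    unfolding SC_vertices_def hex_vertices_def using sm_fix[OF g n] n
    by (intro image_eqI[of _ _ "(n - 1, exit_pos ds (n - 1))"]) auto
  moreover have "(n - 1, exit_pos ds (n - 1)) \<in> hexV (\<lambda>j. spiro_map ds (n, j))"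
    unfolding hexV_def using sm_n0[of n ds] n by (intro image_eqI[of _ _ 0]) auto
  ultimately show "{(n - 1, exit_pos ds (n - 1))} \<subseteq> SC_vertices n ds \<inter> hexV (\<lambda>j. spiro_map ds (n, j))"
    by simp
qed

definition PT :: "nat \<Rightarrow> nat list \<Rightarrow> ((nat \<times> nat) set \<times> (nat \<times> nat) set set) set" where
  "PT n ds = subtrees (PC_vertices n ds) (PC_edges n ds)"
definition ST :: "nat \<Rightarrow> nat list \<Rightarrow> ((nat \<times> nat) set \<times> (nat \<times> nat) set set) set" where
  "ST n ds = subtrees (SC_vertices n ds) (SC_edges n ds)"

lemma card_prod_filter:
  assumes "\<And>p. p \<in> X \<times> Y \<Longrightarrow> P p \<longleftrightarrow> Q (snd p)"
  shows "card {p\<in>X \<times> Y. P p} = card X * card {t\<in>Y. Q t}"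
proof -
  have "{p\<in>X \<times> Y. P p} = X \<times> {t\<in>Y. Q t}" using assms by auto
  then show ?thesis by (simp add: card_cartesian_product)
qed

lemma pc_step:
  assumes g: "good ds N" and n: "1 \<le> n" "Suc n \<le> N"
  shows "card (PT (Suc n) ds) = card (PT n ds) + 36 + card {t\<in>PT n ds. (n - 1, exit_pos ds (n - 1)) \<in> fst t} * 21"
    and "x < 6 \<Longrightarrow> card {t\<in>PT (Suc n) ds. (n, x) \<in> fst t} = 21 + card {t\<in>PT n ds. (n - 1, exit_pos ds (n - 1)) \<in> fst t} * Bc x"
proof -
  define h where "h = (\<lambda>j::nat. (n, j))"
  define u where "u = (n - 1, exit_pos ds (n - 1))"
  define w where "w = (n, 0::nat)"
  have V: "PC_vertices n ds \<inter> hexV h = {}" by (auto simp: PC_vertices_def hex_vertices_def hexV_def h_def)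
  have "exit_pos ds (n - 1) < 6" using ex_lt[OF g, of "n - 1"] n by simp
  then have u: "u \<in> PC_vertices n ds" using n by (simp add: u_def PC_vertices_def hex_vertices_def)
  have w: "w \<in> hexV h" by (auto simp: w_def hexV_def h_def)
  have E1: "\<forall>e\<in>PC_edges n ds. e \<subseteq> PC_vertices n ds" using PC_edges_in[OF g] n by simp
  have c2: "\<forall>e\<in>PC_edges n ds \<union> hexE h. e \<noteq> {}" using PC_edges_ne hexE_ne by blast
  have fin: "finite (PC_vertices n ds)" "finite (hexV h)" "finite (PC_edges n ds)" "finite (hexE h)"
    using fin_hex_vertices fin_PC_edges fin_hex by (auto simp: PC_vertices_def)
  have inj: "inj_on h {0..<6}" unfolding h_def by (rule pc_inj)
  have L: "PT (Suc n) ds = subtrees (PC_vertices n ds \<union> hexV h) (insert {u, w} (PC_edges n ds \<union> hexE h))"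
    unfolding PT_def PC_vertices_Suc PC_edges_Suc[OF n(1)] by (simp add: h_def u_def w_def)
  note cnt = glue_edge_count[OF V u w E1 hexE_in c2 fin]
  have h0: "h 0 = w" by (simp add: h_def w_def)
  have Y: "card {t\<in>subtrees (hexV h) (hexE h). w \<in> fst t} = 21" using hex_x[OF inj, of 0] h0 by simp
  show "card (PT (Suc n) ds) = card (PT n ds) + 36 + card {t\<in>PT n ds. (n - 1, exit_pos ds (n - 1)) \<in> fst t} * 21"
    using cnt[of "\<lambda>_. True"] hex_all[OF inj] Y unfolding L
    by (simp add: card_cartesian_product PT_def u_def)
  assume x: "x < 6"
  have hx: "h x = (n, x)" by (simp add: h_def)
  have z1: "{t\<in>subtrees (PC_vertices n ds) (PC_edges n ds). (n, x) \<in> fst t} = {}"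
    by (auto simp: subtrees_def is_subgraph_def PC_vertices_def hex_vertices_def)
  have z2: "card {p\<in>{t\<in>subtrees (PC_vertices n ds) (PC_edges n ds). u \<in> fst t} \<times> {t\<in>subtrees (hexV h) (hexE h). w \<in> fst t}.
      (n, x) \<in> fst (glueE {u, w} p)} = card {t\<in>subtrees (PC_vertices n ds) (PC_edges n ds). u \<in> fst t} * Bc x"
  proof -
    have "card {p\<in>{t\<in>subtrees (PC_vertices n ds) (PC_edges n ds). u \<in> fst t} \<times> {t\<in>subtrees (hexV h) (hexE h). w \<in> fst t}.
      (n, x) \<in> fst (glueE {u, w} p)} = card {t\<in>subtrees (PC_vertices n ds) (PC_edges n ds). u \<in> fst t} *
        card {t\<in>{t\<in>subtrees (hexV h) (hexE h). w \<in> fst t}. (n, x) \<in> fst t}"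
      by (rule card_prod_filter)
        (auto simp: glueE_def subtrees_def is_subgraph_def PC_vertices_def hex_vertices_def)
    also have "{t\<in>{t\<in>subtrees (hexV h) (hexE h). w \<in> fst t}. (n, x) \<in> fst t} =
        {t\<in>subtrees (hexV h) (hexE h). h 0 \<in> fst t \<and> h x \<in> fst t}" using h0 hx by auto
    finally show ?thesis using hex_0x[OF inj x] by simp
  qed
  show "card {t\<in>PT (Suc n) ds. (n, x) \<in> fst t} = 21 + card {t\<in>PT n ds. (n - 1, exit_pos ds (n - 1)) \<in> fst t} * Bc x"
    using cnt[of "\<lambda>t. (n, x) \<in> fst t"] z1 z2 hex_x[OF inj x] hx unfolding L
    by (simp add: PT_def u_def)
qed

lemma card_part: "finite A \<Longrightarrow> card {t\<in>A. P t} + card {t\<in>A. \<not> P t} = card A"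
proof -
  assume f: "finite A"
  have "A = {t\<in>A. P t} \<union> {t\<in>A. \<not> P t}" by auto
  moreover have "card ({t\<in>A. P t} \<union> {t\<in>A. \<not> P t}) = card {t\<in>A. P t} + card {t\<in>A. \<not> P t}"
    by (rule card_Un_disjoint) (use f in auto)
  ultimately show ?thesis by simp
qed

lemma sc_step:
  assumes g: "good ds N" and n: "1 \<le> n" "Suc n \<le> N"
  shows "card (ST (Suc n) ds) + card {t\<in>ST n ds. (n - 1, exit_pos ds (n - 1)) \<in> fst t}
      = card (ST n ds) + 15 + card {t\<in>ST n ds. (n - 1, exit_pos ds (n - 1)) \<in> fst t} * 21"
    and "x < 6 \<Longrightarrow> card {t\<in>ST (Suc n) ds. spiro_map ds (n, x) \<in> fst t} + Bc x
      = 21 + card {t\<in>ST n ds. (n - 1, exit_pos ds (n - 1)) \<in> fst t} * Bc x"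
proof -
  define h where "h = (\<lambda>j::nat. spiro_map ds (n, j))"
  define v where "v = (n - 1, exit_pos ds (n - 1))"
  have inj: "inj_on h {0..<6}" unfolding h_def by (rule spiro_inj)
  have V: "SC_vertices n ds \<inter> hexV h = {v}" unfolding h_def v_def by (rule SC_inter[OF g n])
  have c2: "\<forall>e\<in>SC_edges n ds \<union> hexE h. card e = 2" using SC_edges_c2 hexE_c2[OF inj] by blast
  have fin: "finite (SC_vertices n ds)" "finite (hexV h)" "finite (SC_edges n ds)" "finite (hexE h)"
    using fin_SC fin_hex by auto
  have L: "ST (Suc n) ds = subtrees (SC_vertices n ds \<union> hexV h) (SC_edges n ds \<union> hexE h)"
    unfolding ST_def SC_vertices_Suc SC_edges_Suc by (simp add: h_def)
  note cnt = glue_vertex_count[OF V SC_edges_in hexE_in c2 fin]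
  have h0: "h 0 = v" using sm_n0[of n ds] n by (simp add: h_def v_def)
  have fT1: "finite (ST n ds)" unfolding ST_def by (rule finite_subtrees[OF fin(1) fin(3)])
  have fT2: "finite (subtrees (hexV h) (hexE h))" by (rule finite_subtrees[OF fin(2) fin(4)])
  have Y: "card {t\<in>subtrees (hexV h) (hexE h). v \<in> fst t} = 21" using hex_x[OF inj, of 0] h0 by simp
  have Yn: "card {t\<in>subtrees (hexV h) (hexE h). v \<notin> fst t} = 15"
    using card_part[OF fT2, of "\<lambda>t. v \<in> fst t"] Y hex_all[OF inj] by simp
  have P1: "card {t\<in>ST n ds. v \<in> fst t} + card {t\<in>ST n ds. v \<notin> fst t} = card (ST n ds)"
    by (rule card_part[OF fT1])
  show "card (ST (Suc n) ds) + card {t\<in>ST n ds. (n - 1, exit_pos ds (n - 1)) \<in> fst t}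
      = card (ST n ds) + 15 + card {t\<in>ST n ds. (n - 1, exit_pos ds (n - 1)) \<in> fst t} * 21"
    using cnt[of "\<lambda>_. True"] Y Yn P1 unfolding L
    by (simp add: card_cartesian_product ST_def v_def)
  assume x: "x < 6"
  have z1: "{t\<in>subtrees (SC_vertices n ds) (SC_edges n ds). v \<notin> fst t \<and> h x \<in> fst t} = {}"
  proof (rule ccontr)
    assume "\<not> ?thesis"
    then obtain t where t: "t \<in> subtrees (SC_vertices n ds) (SC_edges n ds)" "v \<notin> fst t" "h x \<in> fst t" by blast
    then have "h x \<in> SC_vertices n ds" by (auto simp: subtrees_def is_subgraph_def)
    moreover have "h x \<in> hexV h" using x by (simp add: hexV_def)
    ultimately have "h x = v" using V by blast
    then show False using t by simp
  qed
  have z2: "card {p\<in>{t\<in>subtrees (SC_vertices n ds) (SC_edges n ds). v \<in> fst t} \<times> {t\<in>subtrees (hexV h) (hexE h). v \<in> fst t}.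
      h x \<in> fst (glueV p)} = card {t\<in>subtrees (SC_vertices n ds) (SC_edges n ds). v \<in> fst t} * Bc x"
  proof -
    have "card {p\<in>{t\<in>subtrees (SC_vertices n ds) (SC_edges n ds). v \<in> fst t} \<times> {t\<in>subtrees (hexV h) (hexE h). v \<in> fst t}.
      h x \<in> fst (glueV p)} = card {t\<in>subtrees (SC_vertices n ds) (SC_edges n ds). v \<in> fst t} *
        card {t\<in>{t\<in>subtrees (hexV h) (hexE h). v \<in> fst t}. h x \<in> fst t}"
    proof (rule card_prod_filter)
      fix p assume p: "p \<in> {t\<in>subtrees (SC_vertices n ds) (SC_edges n ds). v \<in> fst t} \<times> {t\<in>subtrees (hexV h) (hexE h). v \<in> fst t}"
      have a: "fst (fst p) \<subseteq> SC_vertices n ds" "v \<in> fst (snd p)" using p by (auto simp: subtrees_def is_subgraph_def)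
      have "h x \<in> hexV h" using x by (simp add: hexV_def)
      then have "h x \<in> fst (fst p) \<Longrightarrow> h x = v" using a V by blast
      then show "h x \<in> fst (glueV p) \<longleftrightarrow> h x \<in> fst (snd p)" using a by (auto simp: glueV_def)
    qed
    also have "{t\<in>{t\<in>subtrees (hexV h) (hexE h). v \<in> fst t}. h x \<in> fst t} =
        {t\<in>subtrees (hexV h) (hexE h). h 0 \<in> fst t \<and> h x \<in> fst t}" using h0 by auto
    finally show ?thesis using hex_0x[OF inj x] by simp
  qed
  have z3: "card {t\<in>subtrees (hexV h) (hexE h). v \<notin> fst t \<and> h x \<in> fst t} + Bc x = 21"
    using hex_n0x[OF inj x] h0 by simp
  have "card {t\<in>ST (Suc n) ds. h x \<in> fst t} = card {t\<in>subtrees (hexV h) (hexE h). v \<notin> fst t \<and> h x \<in> fst t}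
     + card {t\<in>ST n ds. v \<in> fst t} * Bc x"
    using cnt[of "\<lambda>t. h x \<in> fst t"] z1 z2 unfolding L unfolding ST_def by simp
  then have "card {t\<in>ST (Suc n) ds. h x \<in> fst t} + Bc x = 21 + card {t\<in>ST n ds. v \<in> fst t} * Bc x"
    using z3 by linarith
  then show "card {t\<in>ST (Suc n) ds. spiro_map ds (n, x) \<in> fst t} + Bc x
      = 21 + card {t\<in>ST n ds. (n - 1, exit_pos ds (n - 1)) \<in> fst t} * Bc x"
    by (simp add: v_def h_def)
qed

lemma base_PC: "PC_vertices (Suc 0) ds = hexV (\<lambda>j::nat. (0::nat, j))" "PC_edges (Suc 0) ds = hexE (\<lambda>j::nat. (0::nat, j))"
proof -
  have "hex_vertices 0 = {}" "hex_edges 0 = {}" by (auto simp: hex_vertices_def hex_edges_def)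
  then show "PC_vertices (Suc 0) ds = hexV (\<lambda>j::nat. (0::nat, j))" "PC_edges (Suc 0) ds = hexE (\<lambda>j::nat. (0::nat, j))"
    unfolding PC_vertices_def PC_edges_def hex_vertices_Suc hex_edges_Suc by auto
qed

lemma base_SC: "SC_vertices (Suc 0) ds = hexV (\<lambda>j. spiro_map ds (0, j))" "SC_edges (Suc 0) ds = hexE (\<lambda>j. spiro_map ds (0, j))"
proof -
  have "hex_vertices 0 = {}" "hex_edges 0 = {}" by (auto simp: hex_vertices_def hex_edges_def)
  then show "SC_vertices (Suc 0) ds = hexV (\<lambda>j. spiro_map ds (0, j))" "SC_edges (Suc 0) ds = hexE (\<lambda>j. spiro_map ds (0, j))"
    using SC_vertices_Suc[of 0 ds] SC_edges_Suc[of 0 ds] by (auto simp: SC_vertices_def SC_edges_def)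
qed

lemma inv:
  assumes g: "good ds N"
  shows "1 \<le> n \<Longrightarrow> n \<le> N \<Longrightarrow> 441 * real (card (ST n ds)) - 400 * real (card (PT n ds)) = 1035 * real n + 441 \<and>
    (\<forall>x<6. 21 * real (card {t\<in>ST n ds. spiro_map ds (n - 1, x) \<in> fst t}) = 20 * real (card {t\<in>PT n ds. (n - 1, x) \<in> fst t}) + 21)"
proof (induction n)
  case 0 then show ?case by simp
next
  case (Suc n)
  show ?case
  proof (cases "n = 0")
    case True
    have injP: "inj_on (\<lambda>j::nat. (0::nat, j)) {0..<6}" by (rule pc_inj)
    have injS: "inj_on (\<lambda>j. spiro_map ds (0, j)) {0..<6}" by (rule spiro_inj)
    have "card (PT (Suc 0) ds) = 36" unfolding PT_def base_PC by (rule hex_all[OF injP])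
    moreover have "card (ST (Suc 0) ds) = 36" unfolding ST_def base_SC by (rule hex_all[OF injS])
    moreover have "card {t\<in>PT (Suc 0) ds. (0, x) \<in> fst t} = 21" if "x < 6" for x
      unfolding PT_def base_PC using hex_x[OF injP that] by simp
    moreover have "card {t\<in>ST (Suc 0) ds. spiro_map ds (0, x) \<in> fst t} = 21" if "x < 6" for x
      unfolding ST_def base_SC using hex_x[OF injS that] by simp
    ultimately show ?thesis using True by simp
  next
    case False
    then have n: "1 \<le> n" "Suc n \<le> N" using Suc by auto
    have IH: "441 * real (card (ST n ds)) - 400 * real (card (PT n ds)) = 1035 * real n + 441"
      "\<And>x. x < 6 \<Longrightarrow> 21 * real (card {t\<in>ST n ds. spiro_map ds (n - 1, x) \<in> fst t}) = 20 * real (card {t\<in>PT n ds. (n - 1, x) \<in> fst t}) + 21"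
      using Suc n by auto
    define e where "e = exit_pos ds (n - 1)"
    have e6: "e < 6" using ex_lt[OF g, of "n - 1"] n by (simp add: e_def)
    define a where "a = card {t\<in>PT n ds. (n - 1, e) \<in> fst t}"
    define b where "b = card {t\<in>ST n ds. (n - 1, e) \<in> fst t}"
    have IHb: "21 * real b = 20 * real a + 21"
      using IH(2)[OF e6] sm_fix[OF g n] by (simp add: a_def b_def e_def)
    have P: "card (PT (Suc n) ds) = card (PT n ds) + 36 + a * 21"
      using pc_step(1)[OF g n] by (simp add: a_def e_def)
    have S: "card (ST (Suc n) ds) + b = card (ST n ds) + 15 + b * 21"
      using sc_step(1)[OF g n] by (simp add: b_def e_def)
    have rP: "real (card (PT (Suc n) ds)) = real (card (PT n ds)) + 36 + real a * 21"
      using arg_cong[OF P, of real] by simp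
    have rS: "real (card (ST (Suc n) ds)) + real b = real (card (ST n ds)) + 15 + real b * 21"
      using arg_cong[OF S, of real] by simp
    have part1: "441 * real (card (ST (Suc n) ds)) - 400 * real (card (PT (Suc n) ds)) = 1035 * real (Suc n) + 441"
      using rP rS IH(1) IHb by simp
    have part2: "21 * real (card {t\<in>ST (Suc n) ds. spiro_map ds (Suc n - 1, x) \<in> fst t})
        = 20 * real (card {t\<in>PT (Suc n) ds. (Suc n - 1, x) \<in> fst t}) + 21" if x: "x < 6" for x
    proof -
      have A: "card {t\<in>PT (Suc n) ds. (n, x) \<in> fst t} = 21 + a * Bc x"
        using pc_step(2)[OF g n x] by (simp add: a_def e_def)
      have B: "card {t\<in>ST (Suc n) ds. spiro_map ds (n, x) \<in> fst t} + Bc x = 21 + b * Bc x"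
        using sc_step(2)[OF g n x] by (simp add: b_def e_def)
      have rA: "real (card {t\<in>PT (Suc n) ds. (n, x) \<in> fst t}) = 21 + real a * real (Bc x)"
        using arg_cong[OF A, of real] by simp
      have rB: "real (card {t\<in>ST (Suc n) ds. spiro_map ds (n, x) \<in> fst t}) + real (Bc x) = 21 + real b * real (Bc x)"
        using arg_cong[OF B, of real] by simp
      have k: "21 * (real b * real (Bc x)) = (20 * real a + 21) * real (Bc x)"
        using IHb by (metis mult.assoc)
      show ?thesis using rA rB k by (simp add: algebra_simps)
    qed
    show ?thesis using part1 part2 by simp
  qed
qed

lemma choice_good: assumes "ds \<in> choice_seqs n" shows "good ds n"
  unfolding good_def
proof (intro allI impI)
  fix i assume i: "0 < i" "i + 1 < n"
  have "length ds = n - 2" and "set ds \<subseteq> {1, 2, 3}" using assms by (auto simp: choice_seqs_def)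
  moreover have "i - 1 < n - 2" using i by linarith
  ultimately have "ds ! (i - 1) \<in> set ds" by simp
  then have "ds ! (i - 1) \<in> {1, 2, 3}" using \<open>set ds \<subseteq> {1, 2, 3}\<close> by blast
  then show "exit_pos ds i \<in> {1, 2, 3}" using i by (simp add: exit_pos_def)
qed

lemma per_ds:
  assumes "ds \<in> choice_seqs n" "1 \<le> n"
  shows "400 * real (STN (PC_vertices n ds) (PC_edges n ds)) = 441 * real (STN (SC_vertices n ds) (SC_edges n ds)) - 1035 * real n - 441"
  using inv[OF choice_good[OF assms(1)] assms(2) order_refl] by (simp add: STN_eq PT_def ST_def)

lemma seqs_Suc: "{ds. length ds = Suc m \<and> set ds \<subseteq> D} = (\<lambda>(d, ds). d # ds) ` (D \<times> {ds. length ds = m \<and> set ds \<subseteq> D})"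
proof (intro equalityI subsetI)
  fix xs assume "xs \<in> {ds. length ds = Suc m \<and> set ds \<subseteq> D}"
  then obtain d ds where "xs = d # ds" "length ds = m" "d \<in> D" "set ds \<subseteq> D" by (cases xs) auto
  then show "xs \<in> (\<lambda>(d, ds). d # ds) ` (D \<times> {ds. length ds = m \<and> set ds \<subseteq> D})" by auto
qed auto

lemma prob_sum: "(\<Sum>ds\<in>{ds. length ds = m \<and> set ds \<subseteq> {1, 2, 3}}. seq_prob p1 p2 ds) = 1"
proof (induction m)
  case 0
  have "{ds. length ds = 0 \<and> set ds \<subseteq> {1, 2, 3::nat}} = {[]}" by auto
  then show ?case by (simp add: seq_prob_def)
next
  case (Suc m)
  let ?D = "{1, 2, 3::nat}"
  let ?M = "{ds. length ds = m \<and> set ds \<subseteq> ?D}"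
  have fin: "finite ?M" using finite_lists_length_eq[of ?D m] by (simp add: conj_commute)
  have inj: "inj_on (\<lambda>(d, ds). d # ds) (?D \<times> ?M)" by (auto simp: inj_on_def)
  have "(\<Sum>ds\<in>{ds. length ds = Suc m \<and> set ds \<subseteq> ?D}. seq_prob p1 p2 ds)
      = (\<Sum>p\<in>?D \<times> ?M. seq_prob p1 p2 ((\<lambda>(d, ds). d # ds) p))"
    unfolding seqs_Suc sum.reindex[OF inj] by (simp add: comp_def)
  also have "\<dots> = (\<Sum>d\<in>?D. \<Sum>ds\<in>?M. step_prob p1 p2 d * seq_prob p1 p2 ds)"
    unfolding sum.cartesian_product by (rule sum.cong) (auto simp: seq_prob_def)
  also have "\<dots> = (\<Sum>d\<in>?D. step_prob p1 p2 d * (\<Sum>ds\<in>?M. seq_prob p1 p2 ds))"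
    by (simp only: sum_distrib_left)
  also have "\<dots> = (\<Sum>d\<in>?D. step_prob p1 p2 d)"
    by (simp only: Suc.IH mult_1_right)
  also have "\<dots> = 1" by (simp add: step_prob_def)
  finally show ?case .
qed

theorem theorem6:
  fixes p1 p2 :: real and n :: nat
  assumes "p1 \<ge> 0" and "p2 \<ge> 0" and "p1 + p2 \<le> 1" and "n \<ge> 1"
  shows "400 * E_STN_RPC n p1 p2 = 441 * E_STN_RSC n p1 p2 - 1035 * real n - 441"
proof -
  have ps: "(\<Sum>ds\<in>choice_seqs n. seq_prob p1 p2 ds) = 1"
    unfolding choice_seqs_def by (rule prob_sum)
  have "400 * E_STN_RPC n p1 p2 = (\<Sum>ds\<in>choice_seqs n. seq_prob p1 p2 ds * (400 * real (STN (PC_vertices n ds) (PC_edges n ds))))"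
    unfolding E_STN_RPC_def by (simp add: sum_distrib_left algebra_simps)
  also have "\<dots> = (\<Sum>ds\<in>choice_seqs n. seq_prob p1 p2 ds * (441 * real (STN (SC_vertices n ds) (SC_edges n ds)) - 1035 * real n - 441))"
    by (rule sum.cong) (use per_ds assms(4) in auto)
  also have "\<dots> = (\<Sum>ds\<in>choice_seqs n. 441 * (seq_prob p1 p2 ds * real (STN (SC_vertices n ds) (SC_edges n ds)))
      - (1035 * real n + 441) * seq_prob p1 p2 ds)"
    by (rule sum.cong) (simp_all add: algebra_simps)
  also have "\<dots> = 441 * E_STN_RSC n p1 p2 - (1035 * real n + 441) * (\<Sum>ds\<in>choice_seqs n. seq_prob p1 p2 ds)"
    unfolding E_STN_RSC_def by (simp only: sum_subtractf sum_distrib_left)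
  finally show ?thesis using ps by simp
qed

end
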